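(* Let $\Omega\subseteq\mathbb C^d$ be an irreducible bounded symmetric domain and $\mathbb K$ the group of linear biholomorphic automorphisms of $\Omega$. Let $\mathcal H_K(\Omega,\mathbb C^n)$ be a reproducing kernel Hilbert space of holomorphic functions on $\Omega$ with values in $\mathbb C^n$ and reproducing kernel $K:\Omega\times\Omega\to\mathcal M_n(\mathbb C)$. Assume that $\mathbb C^n\otimes\mathcal P$ (the $\mathbb C^n$-valued polynomials) is densely contained in $\mathcal H_K(\Omega,\mathbb C^n)$, that the $d$-tuple $\boldsymbol M$ of multiplication by the coordinate functions on $\mathcal H_K(\Omega,\mathbb C^n)$ is bounded, and that $K$ is normalized at $0$, i.e. $K(\boldsymbol z,0)=I_n$ for all $\boldsymbol z\in\Omega$. Then the following are equivalent: (1) $\boldsymbol M$ is $\mathbb K$-homogeneous, i.e. for each $k\in\mathbb K$ there is a unitary $\Gamma(k)$ on $\mathcal H_K(\Omega,\mathbb C^n)$ with $\Gamma(k)(k\cdot\boldsymbol M)\Gamma(k)^*=\boldsymbol M$; (2) $K$ is quasi-invariant under $\mathbb K$ with a multiplier $c:\mathbb K\times\Omega\to\mathcal U(n)$ such that $c(k,\boldsymbol z)$ is independent of $\boldsymbol z$; (3) there is a map $c:\mathbb K\to\mathcal U(n)$ such that for each $k\in\mathbb K$ the operator $(\Gamma(k)f)(\boldsymbol z):=c(k)f(k^{-1}\cdot\boldsymbol z)$ is unitary on $\mathcal H_K(\Omega,\mathbb C^n)$.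
   Context: For $k\in\mathbb K$, $k\cdot\boldsymbol z=(k_1(\boldsymbol z),\ldots,k_d(\boldsymbol z))$ with $k_j$ linear, and $k\cdot\boldsymbol M=(k_1(\boldsymbol M),\ldots,k_d(\boldsymbol M))$. $K$ is quasi-invariant under $\mathbb K$ with multiplier $c$ if $K(\boldsymbol z,\boldsymbol w)=c(k,\boldsymbol z)K(k^{-1}\cdot\boldsymbol z,k^{-1}\cdot\boldsymbol w)c(k,\boldsymbol w)^*$ for all $k\in\mathbb K$, $\boldsymbol z,\boldsymbol w\in\Omega$. *)

theory Defs
  imports "HOL-Analysis.Analysis" "HOL-Library.Function_Algebras"
begin

section \<open>Several complex variables: holomorphic maps, domains\<close>

text \<open>Points of C^d are vectors of type complex^'d; complex scalar multiplication is *s.\<close>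

definition holo_on :: "(complex^'d) set \<Rightarrow> (complex^'d \<Rightarrow> complex^'m) \<Rightarrow> bool" where
  "holo_on S f \<longleftrightarrow> (\<forall>x\<in>S. \<exists>L. (f has_derivative L) (at x) \<and>
                         (\<forall>(c::complex) v. L (c *s v) = c *s L v))"

definition biholo :: "(complex^'d) set \<Rightarrow> (complex^'d) set \<Rightarrow> (complex^'d \<Rightarrow> complex^'d) \<Rightarrow> bool" where
  "biholo S T f \<longleftrightarrow> holo_on S f \<and> bij_betw f S T \<and> holo_on T (inv_into S f)"

definition bounded_domain :: "(complex^'d) set \<Rightarrow> bool" where
  "bounded_domain \<Omega> \<longleftrightarrow> open \<Omega> \<and> connected \<Omega> \<and> \<Omega> \<noteq> {} \<and> bounded \<Omega>"

text \<open>Bounded symmetric domain: every point is an isolated fixed point of an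
  involutive biholomorphic automorphism.\<close>
definition bounded_symmetric_domain :: "(complex^'d) set \<Rightarrow> bool" where
  "bounded_symmetric_domain \<Omega> \<longleftrightarrow> bounded_domain \<Omega> \<and>
     (\<forall>p\<in>\<Omega>. \<exists>s. biholo \<Omega> \<Omega> s \<and> (\<forall>z\<in>\<Omega>. s (s z) = z) \<and> s p = p \<and>
        (\<exists>e>0. \<forall>z\<in>\<Omega>. z \<noteq> p \<and> dist z p < e \<longrightarrow> s z \<noteq> z))"

text \<open>Coordinate projection onto the coordinates in I (others set to 0).\<close>
definition proj :: "'d set \<Rightarrow> complex^'d \<Rightarrow> complex^'d" where
  "proj I z = (\<chi> i. if i \<in> I then z$i else 0)"

text \<open>Irreducible: not biholomorphic to a (bounded) domain which is a product of two
  domains of positive dimension (living in complementary coordinate subspaces).\<close>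
definition irreducible_bsd :: "(complex^'d) set \<Rightarrow> bool" where
  "irreducible_bsd \<Omega> \<longleftrightarrow> bounded_symmetric_domain \<Omega> \<and>
     \<not> (\<exists>I D \<phi>. I \<noteq> {} \<and> I \<noteq> UNIV \<and> bounded_domain D \<and> biholo \<Omega> D \<phi> \<and>
            D = {z. proj I z \<in> proj I ` D \<and> proj (-I) z \<in> proj (-I) ` D})"

text \<open>The group of linear biholomorphic automorphisms, as matrices acting by *v.\<close>
definition lin_aut :: "(complex^'d) set \<Rightarrow> (complex^'d^'d) set" where
  "lin_aut \<Omega> = {A. biholo \<Omega> \<Omega> (\<lambda>z. A *v z)}"

section \<open>Matrices\<close>

definition cadj :: "complex^'n^'n \<Rightarrow> complex^'n^'n" where
  "cadj U = (\<chi> i j. cnj (U$j$i))"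

definition unitary_mat :: "complex^'n^'n \<Rightarrow> bool" where
  "unitary_mat U \<longleftrightarrow> U ** cadj U = mat 1 \<and> cadj U ** U = mat 1"

definition vinner :: "complex^'n \<Rightarrow> complex^'n \<Rightarrow> complex" where
  "vinner u v = (\<Sum>i\<in>UNIV. u$i * cnj (v$i))"

section \<open>Hilbert spaces of C^n-valued functions on \<Omega>\<close>

text \<open>A Hilbert space of functions is a set H of functions (vanishing outside \<Omega>)
  with an inner product ip (linear in the first argument).\<close>

definition hnorm :: "('a \<Rightarrow> 'a \<Rightarrow> complex) \<Rightarrow> 'a \<Rightarrow> real" where
  "hnorm ip f = sqrt (Re (ip f f))"

definition smult_fun :: "complex \<Rightarrow> ('x \<Rightarrow> complex^'n) \<Rightarrow> ('x \<Rightarrow> complex^'n)" where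
  "smult_fun c f = (\<lambda>z. c *s f z)"

definition kernel_fun :: "(complex^'d) set \<Rightarrow> (complex^'d \<Rightarrow> complex^'d \<Rightarrow> complex^'n^'n)
     \<Rightarrow> complex^'d \<Rightarrow> complex^'n \<Rightarrow> (complex^'d \<Rightarrow> complex^'n)" where
  "kernel_fun \<Omega> K w \<xi> = (\<lambda>z. if z \<in> \<Omega> then K z w *v \<xi> else 0)"

definition rkhs_holo ::
  "(complex^'d) set \<Rightarrow> (complex^'d \<Rightarrow> complex^'n) set
   \<Rightarrow> ((complex^'d \<Rightarrow> complex^'n) \<Rightarrow> (complex^'d \<Rightarrow> complex^'n) \<Rightarrow> complex)
   \<Rightarrow> (complex^'d \<Rightarrow> complex^'d \<Rightarrow> complex^'n^'n) \<Rightarrow> bool" where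
  "rkhs_holo \<Omega> H ip K \<longleftrightarrow>
     (\<forall>f\<in>H. holo_on \<Omega> f \<and> (\<forall>z. z \<notin> \<Omega> \<longrightarrow> f z = 0)) \<and>
     0 \<in> H \<and> (\<forall>f\<in>H. \<forall>g\<in>H. f + g \<in> H) \<and> (\<forall>c. \<forall>f\<in>H. smult_fun c f \<in> H) \<and>
     (\<forall>f\<in>H. \<forall>g\<in>H. \<forall>h\<in>H. ip (f + g) h = ip f h + ip g h) \<and>
     (\<forall>c. \<forall>f\<in>H. \<forall>g\<in>H. ip (smult_fun c f) g = c * ip f g) \<and>
     (\<forall>f\<in>H. \<forall>g\<in>H. ip g f = cnj (ip f g)) \<and>
     (\<forall>f\<in>H. Re (ip f f) \<ge> 0) \<and>
     (\<forall>f\<in>H. ip f f = 0 \<longrightarrow> f = 0) \<and>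
     (\<forall>s. (\<forall>n. s n \<in> H) \<and>
          (\<forall>e>0. \<exists>N. \<forall>m\<ge>N. \<forall>n\<ge>N. hnorm ip (s m - s n) < e) \<longrightarrow>
          (\<exists>f\<in>H. (\<lambda>n. hnorm ip (s n - f)) \<longlonglongrightarrow> 0)) \<and>
     (\<forall>w\<in>\<Omega>. \<forall>\<xi>. kernel_fun \<Omega> K w \<xi> \<in> H \<and>
          (\<forall>f\<in>H. ip f (kernel_fun \<Omega> K w \<xi>) = vinner (f w) \<xi>))"

section \<open>Polynomials\<close>

definition monomial :: "('d \<Rightarrow> nat) \<Rightarrow> complex^'d \<Rightarrow> complex" where
  "monomial \<alpha> z = (\<Prod>i\<in>UNIV. (z$i) ^ (\<alpha> i))"

text \<open>C^n-valued polynomials in d variables (elements of C^n \<otimes> P).\<close>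
definition vec_poly :: "(complex^'d \<Rightarrow> complex^'n) \<Rightarrow> bool" where
  "vec_poly p \<longleftrightarrow> (\<exists>A c. finite A \<and> (\<forall>z. p z = (\<Sum>\<alpha>\<in>A. monomial \<alpha> z *s c \<alpha>)))"

definition restrict_fun :: "(complex^'d) set \<Rightarrow> (complex^'d \<Rightarrow> complex^'n) \<Rightarrow> complex^'d \<Rightarrow> complex^'n" where
  "restrict_fun \<Omega> p = (\<lambda>z. if z \<in> \<Omega> then p z else 0)"

definition polys_dense :: "(complex^'d) set \<Rightarrow> (complex^'d \<Rightarrow> complex^'n) set
   \<Rightarrow> ((complex^'d \<Rightarrow> complex^'n) \<Rightarrow> (complex^'d \<Rightarrow> complex^'n) \<Rightarrow> complex) \<Rightarrow> bool" where
  "polys_dense \<Omega> H ip \<longleftrightarrow>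
     (\<forall>p. vec_poly p \<longrightarrow> restrict_fun \<Omega> p \<in> H) \<and>
     (\<forall>f\<in>H. \<forall>e>0. \<exists>p. vec_poly p \<and> hnorm ip (f - restrict_fun \<Omega> p) < e)"

section \<open>Operators\<close>

text \<open>Multiplication by the j-th coordinate function.\<close>
definition mult_op :: "'d \<Rightarrow> (complex^'d \<Rightarrow> complex^'n) \<Rightarrow> (complex^'d \<Rightarrow> complex^'n)" where
  "mult_op j f = (\<lambda>z. (z$j) *s f z)"

definition bounded_op_on where
  "bounded_op_on H ip T \<longleftrightarrow> (\<exists>C. \<forall>f\<in>H. T f \<in> H \<and> hnorm ip (T f) \<le> C * hnorm ip f)"

text \<open>k_j(M) = sum_i A_{ji} M_i, where k z = A z.\<close>
definition lin_mult_op :: "complex^'d^'d \<Rightarrow> 'd \<Rightarrow> (complex^'d \<Rightarrow> complex^'n) \<Rightarrow> (complex^'d \<Rightarrow> complex^'n)" where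
  "lin_mult_op A j f = (\<Sum>i\<in>UNIV. smult_fun (A$j$i) (mult_op i f))"

definition unitary_op where
  "unitary_op H ip T \<longleftrightarrow> T ` H = H \<and>
     (\<forall>f\<in>H. \<forall>g\<in>H. T (f + g) = T f + T g) \<and>
     (\<forall>c. \<forall>f\<in>H. T (smult_fun c f) = smult_fun c (T f)) \<and>
     (\<forall>f\<in>H. \<forall>g\<in>H. ip (T f) (T g) = ip f g)"

text \<open>Hilbert space adjoint of T on H.\<close>
definition hadj where
  "hadj H ip T g = (THE h. h \<in> H \<and> (\<forall>f\<in>H. ip (T f) g = ip f h))"

end

theory Submission
  imports Defs
begin


lemma fun_sum_apply: "(sum f A) x = sum (\<lambda>a. f a x) A"
  by (induction A rule: infinite_finite_induct) auto

locale hs =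
  fixes \<Omega> :: "(complex^'d) set"
    and H :: "(complex^'d \<Rightarrow> complex^'n) set"
    and ip :: "(complex^'d \<Rightarrow> complex^'n) \<Rightarrow> (complex^'d \<Rightarrow> complex^'n) \<Rightarrow> complex"
    and K :: "complex^'d \<Rightarrow> complex^'d \<Rightarrow> complex^'n^'n"
  assumes rkhs: "rkhs_holo \<Omega> H ip K"
begin

lemmas R = rkhs[unfolded rkhs_holo_def]
lemmas C1 = R[THEN conjunct1]
lemmas C2 = R[THEN conjunct2, THEN conjunct1]
lemmas C3 = R[THEN conjunct2, THEN conjunct2, THEN conjunct1]
lemmas C4 = R[THEN conjunct2, THEN conjunct2, THEN conjunct2, THEN conjunct1]
lemmas C5 = R[THEN conjunct2, THEN conjunct2, THEN conjunct2, THEN conjunct2, THEN conjunct1]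
lemmas C6 = R[THEN conjunct2, THEN conjunct2, THEN conjunct2, THEN conjunct2, THEN conjunct2, THEN conjunct1]
lemmas C7 = R[THEN conjunct2, THEN conjunct2, THEN conjunct2, THEN conjunct2, THEN conjunct2, THEN conjunct2, THEN conjunct1]
lemmas C8 = R[THEN conjunct2, THEN conjunct2, THEN conjunct2, THEN conjunct2, THEN conjunct2, THEN conjunct2, THEN conjunct2, THEN conjunct1]
lemmas C9 = R[THEN conjunct2, THEN conjunct2, THEN conjunct2, THEN conjunct2, THEN conjunct2, THEN conjunct2, THEN conjunct2, THEN conjunct2, THEN conjunct1]
lemmas C10 = R[THEN conjunct2, THEN conjunct2, THEN conjunct2, THEN conjunct2, THEN conjunct2, THEN conjunct2, THEN conjunct2, THEN conjunct2, THEN conjunct2, THEN conjunct1]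
lemmas C11 = R[THEN conjunct2, THEN conjunct2, THEN conjunct2, THEN conjunct2, THEN conjunct2, THEN conjunct2, THEN conjunct2, THEN conjunct2, THEN conjunct2, THEN conjunct2]

lemma vanish: "f \<in> H \<Longrightarrow> z \<notin> \<Omega> \<Longrightarrow> f z = 0"
  using C1 by blast
lemma zero_in[simp]: "0 \<in> H"
  using C2 by blast
lemma add_in[simp]: "f \<in> H \<Longrightarrow> g \<in> H \<Longrightarrow> f + g \<in> H"
  using C3 by blast
lemma smult_in[simp]: "f \<in> H \<Longrightarrow> smult_fun c f \<in> H"
  using C4 by blast
lemma ip_add_left: "f \<in> H \<Longrightarrow> g \<in> H \<Longrightarrow> h \<in> H \<Longrightarrow> ip (f + g) h = ip f h + ip g h"
  using C5 by blast
lemma ip_smult_left: "f \<in> H \<Longrightarrow> g \<in> H \<Longrightarrow> ip (smult_fun c f) g = c * ip f g"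
  using C6 by blast
lemma ip_sym: "f \<in> H \<Longrightarrow> g \<in> H \<Longrightarrow> ip g f = cnj (ip f g)"
  using C7 by blast
lemma ip_pos: "f \<in> H \<Longrightarrow> Re (ip f f) \<ge> 0"
  using C8 by blast
lemma ip_def0: "f \<in> H \<Longrightarrow> ip f f = 0 \<Longrightarrow> f = 0"
  using C9 by blast
lemma complete: "(\<forall>n. s n \<in> H) \<Longrightarrow> (\<forall>e>0. \<exists>N. \<forall>m\<ge>N. \<forall>n\<ge>N. hnorm ip (s m - s n) < e) \<Longrightarrow>
          (\<exists>f\<in>H. (\<lambda>n. hnorm ip (s n - f)) \<longlonglongrightarrow> 0)"
  using C10 by blast
lemma ker_in[simp]: "w \<in> \<Omega> \<Longrightarrow> kernel_fun \<Omega> K w \<xi> \<in> H"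
  using C11 by blast
lemma reprod: "w \<in> \<Omega> \<Longrightarrow> f \<in> H \<Longrightarrow> ip f (kernel_fun \<Omega> K w \<xi>) = vinner (f w) \<xi>"
  using C11 by blast

lemma smult_fun_minus: "f - g = f + smult_fun (-1) g"
  by (auto simp: smult_fun_def fun_eq_iff vec_eq_iff)
lemma minus_in[simp]: "f \<in> H \<Longrightarrow> g \<in> H \<Longrightarrow> f - g \<in> H"
  by (simp add: smult_fun_minus)
lemma smult_fun_0[simp]: "smult_fun 0 f = 0"
  by (auto simp: smult_fun_def fun_eq_iff)

lemma ip_zero_left[simp]: "f \<in> H \<Longrightarrow> ip 0 f = 0"
  using ip_smult_left[of 0 f 0] by simp
lemma ip_zero_right[simp]: "f \<in> H \<Longrightarrow> ip f 0 = 0"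
  using ip_sym[of f 0] by simp
lemma ip_add_right: "f \<in> H \<Longrightarrow> g \<in> H \<Longrightarrow> h \<in> H \<Longrightarrow> ip h (f + g) = ip h f + ip h g"
  using ip_sym[of "f+g" h] ip_sym[of f h] ip_sym[of g h] ip_add_left[of f g h] by simp
lemma ip_smult_right: "f \<in> H \<Longrightarrow> g \<in> H \<Longrightarrow> ip g (smult_fun c f) = cnj c * ip g f"
  using ip_sym[of "smult_fun c f" g] ip_sym[of f g] ip_smult_left[of f g c] by simp
lemma ip_minus_left: "f \<in> H \<Longrightarrow> g \<in> H \<Longrightarrow> h \<in> H \<Longrightarrow> ip (f - g) h = ip f h - ip g h"
  by (simp add: smult_fun_minus ip_add_left ip_smult_left)
lemma ip_minus_right: "f \<in> H \<Longrightarrow> g \<in> H \<Longrightarrow> h \<in> H \<Longrightarrow> ip h (f - g) = ip h f - ip h g"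
  by (simp add: smult_fun_minus ip_add_right ip_smult_right)

lemma ip_real: "f \<in> H \<Longrightarrow> ip f f = complex_of_real (Re (ip f f))"
  using ip_sym[of f f] by (simp add: complex_eq_iff)

lemma nn_zero: "f \<in> H \<Longrightarrow> Re (ip f f) = 0 \<Longrightarrow> f = 0"
  using ip_real ip_def0 by fastforce

lemma hnorm_sq: "f \<in> H \<Longrightarrow> (hnorm ip f)^2 = Re (ip f f)"
  by (simp add: hnorm_def ip_pos)

lemma proj_ident:
  assumes f: "f \<in> H" and g: "g \<in> H" and r: "Re (ip g g) \<noteq> 0"
  shows "Re (ip (f - smult_fun (ip f g / ip g g) g) (f - smult_fun (ip f g / ip g g) g))
        = Re (ip f f) - (cmod (ip f g))^2 / Re (ip g g)"
proof -
  obtain a where a: "ip f g = a" by blast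
  obtain r where rr: "Re (ip g g) = r" by blast
  have gg: "ip g g = complex_of_real r" using ip_real[OF g] rr by simp
  have gf: "ip g f = cnj a" using ip_sym[OF f g] a by simp
  have rn: "r \<noteq> 0" using r rr by simp
  have e: "\<And>t. ip (f - smult_fun t g) (f - smult_fun t g) = ip f f - cnj t * a - t * cnj a + t * cnj t * complex_of_real r"
  proof -
    fix t
    have sg: "smult_fun t g \<in> H" using g by simp
    have 1: "ip (f - smult_fun t g) (f - smult_fun t g) = ip f (f - smult_fun t g) - ip (smult_fun t g) (f - smult_fun t g)"
      using ip_minus_left[OF f sg] f sg by simp
    have 2: "ip f (f - smult_fun t g) = ip f f - cnj t * a"
      using ip_minus_right[OF f sg f] ip_smult_right[OF g f] a by simp
    have 3: "ip (smult_fun t g) (f - smult_fun t g) = t * cnj a - t * (cnj t * complex_of_real r)"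
      using ip_smult_left[OF g, of "f - smult_fun t g" t] ip_minus_right[OF f sg g] ip_smult_right[OF g g] gf gg f sg
      by (simp add: right_diff_distrib)
    show "ip (f - smult_fun t g) (f - smult_fun t g) = ip f f - cnj t * a - t * cnj a + t * cnj t * complex_of_real r"
      unfolding 1 2 3 by (simp add: algebra_simps)
  qed
  have id: "ip f f - cnj (a / complex_of_real r) * a - (a / complex_of_real r) * cnj a + (a / complex_of_real r) * cnj (a / complex_of_real r) * complex_of_real r
     = ip f f - complex_of_real ((cmod a)^2 / r)"
  proof -
    have na: "a * cnj a = complex_of_real ((cmod a)^2)" using complex_norm_square[of a] by simp
    have na2: "cnj a * a = complex_of_real ((cmod a)^2)" using na by (simp add: mult.commute)
    show ?thesis using rn by (simp add: field_simps na na2)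
  qed
  have "ip (f - smult_fun (a / complex_of_real r) g) (f - smult_fun (a / complex_of_real r) g)
     = ip f f - complex_of_real ((cmod a)^2 / r)"
    unfolding e[of "a / complex_of_real r"] by (rule id)
  then have "Re (ip (f - smult_fun (a / complex_of_real r) g) (f - smult_fun (a / complex_of_real r) g))
     = Re (ip f f) - (cmod a)^2 / r" by simp
  then show ?thesis unfolding a rr gg by simp
qed

lemma cauchy_schwarz:
  assumes f: "f \<in> H" and g: "g \<in> H"
  shows "cmod (ip f g) \<le> hnorm ip f * hnorm ip g"
proof (cases "Re (ip g g) = 0")
  case True
  then have "g = 0" using nn_zero g by blast
  then show ?thesis using f by (simp add: hnorm_def ip_pos)
next
  case False
  have pos: "Re (ip g g) > 0" using ip_pos[OF g] False by linarith
  have sH: "f - smult_fun (ip f g / ip g g) g \<in> H" using f g by simp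
  have "0 \<le> Re (ip (f - smult_fun (ip f g / ip g g) g) (f - smult_fun (ip f g / ip g g) g))"
    using ip_pos[OF sH] .
  then have "(cmod (ip f g))^2 / Re (ip g g) \<le> Re (ip f f)"
    using proj_ident[OF f g False] by simp
  then have "(cmod (ip f g))^2 \<le> Re (ip f f) * Re (ip g g)"
    using pos by (simp add: divide_le_eq)
  also have "\<dots> = (hnorm ip f * hnorm ip g)^2"
    unfolding power_mult_distrib hnorm_sq[OF f] hnorm_sq[OF g] ..
  finally have "(cmod (ip f g))^2 \<le> (hnorm ip f * hnorm ip g)^2" .
  moreover have "hnorm ip f * hnorm ip g \<ge> 0" unfolding hnorm_def using ip_pos[OF f] ip_pos[OF g] by simp
  ultimately show ?thesis by (rule power2_le_imp_le)
qed

end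


lemma vinner_axis: "vinner x (axis i 1) = x $ i"
  unfolding vinner_def axis_def by (simp add: if_distrib cong: if_cong)

lemma vinner_eqI: "(\<And>\<eta>. vinner x \<eta> = vinner y \<eta>) \<Longrightarrow> x = y"
  by (metis vinner_axis vec_eq_iff)

lemma vinner_zero_left[simp]: "vinner 0 y = 0"
  unfolding vinner_def by simp

lemma vinner_mat: "vinner (M *v x) y = vinner x (cadj M *v y)"
proof -
  have "vinner (M *v x) y = (\<Sum>i\<in>UNIV. \<Sum>j\<in>UNIV. M$i$j * x$j * cnj (y$i))"
    unfolding vinner_def matrix_vector_mult_def by (simp add: sum_distrib_right)
  also have "\<dots> = (\<Sum>j\<in>UNIV. \<Sum>i\<in>UNIV. M$i$j * x$j * cnj (y$i))"
    by (rule sum.swap)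
  also have "\<dots> = vinner x (cadj M *v y)"
    unfolding vinner_def matrix_vector_mult_def cadj_def
    by (simp add: sum_distrib_left mult_ac)
  finally show ?thesis .
qed

lemma vinner_unitary: "cadj u ** u = mat 1 \<Longrightarrow> vinner (u *v x) (u *v y) = vinner x y"
  by (simp add: vinner_mat matrix_vector_mul_assoc)

context hs begin

lemma ip_cont_left:
  assumes a: "\<forall>n. a n \<in> H" and b: "b \<in> H" and k: "k \<in> H"
    and lim: "(\<lambda>n. hnorm ip (a n - b)) \<longlonglongrightarrow> 0"
  shows "(\<lambda>n. ip (a n) k) \<longlonglongrightarrow> ip b k"
proof -
  have "(\<lambda>n. ip (a n) k - ip b k) \<longlonglongrightarrow> 0"
  proof (rule Lim_null_comparison)
    show "\<forall>\<^sub>F n in sequentially. norm (ip (a n) k - ip b k) \<le> hnorm ip (a n - b) * hnorm ip k"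
      using cauchy_schwarz[of "a n - b" k for n] ip_minus_left[of "a n" b k for n] a b k
      by (intro always_eventually allI) simp
    show "(\<lambda>n. hnorm ip (a n - b) * hnorm ip k) \<longlonglongrightarrow> 0"
      using tendsto_mult_left_zero[OF lim] .
  qed
  then show ?thesis by (rule LIM_zero_cancel)
qed

lemma ip_cont_right:
  assumes a: "\<forall>n. a n \<in> H" and b: "b \<in> H" and k: "k \<in> H"
    and lim: "(\<lambda>n. hnorm ip (a n - b)) \<longlonglongrightarrow> 0"
  shows "(\<lambda>n. ip k (a n)) \<longlonglongrightarrow> ip k b"
proof -
  have "(\<lambda>n. cnj (ip (a n) k)) \<longlonglongrightarrow> cnj (ip b k)"
    using ip_cont_left[OF assms] by (rule tendsto_cnj)
  moreover have "\<And>n. ip k (a n) = cnj (ip (a n) k)" using a k ip_sym by blast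
  moreover have "ip k b = cnj (ip b k)" using b k ip_sym by blast
  ultimately show ?thesis by simp
qed

lemma parallelogram:
  assumes a: "a \<in> H" and b: "b \<in> H"
  shows "Re (ip (a - b) (a - b)) + Re (ip (a + b) (a + b)) = 2 * Re (ip a a) + 2 * Re (ip b b)"
proof -
  have "ip (a - b) (a - b) = ip a a - ip a b - ip b a + ip b b"
    using a b by (simp add: ip_minus_left ip_minus_right)
  moreover have "ip (a + b) (a + b) = ip a a + ip a b + ip b a + ip b b"
    using a b by (simp add: ip_add_left ip_add_right)
  ultimately show ?thesis by simp
qed

lemma nn_smult: "x \<in> H \<Longrightarrow> Re (ip (smult_fun c x) (smult_fun c x)) = (cmod c)^2 * Re (ip x x)"
proof -
  assume x: "x \<in> H"
  have "ip (smult_fun c x) (smult_fun c x) = (c * cnj c) * ip x x"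
    using x by (simp add: ip_smult_left ip_smult_right)
  also have "\<dots> = complex_of_real ((cmod c)^2) * complex_of_real (Re (ip x x))"
    using ip_real[OF x] complex_norm_square[of c] by simp
  finally show ?thesis by simp
qed

inductive_set KS :: "(complex^'d \<Rightarrow> complex^'n) set" where
  KS0: "0 \<in> KS"
| KSk: "w \<in> \<Omega> \<Longrightarrow> kernel_fun \<Omega> K w \<xi> \<in> KS"
| KSa: "s \<in> KS \<Longrightarrow> t \<in> KS \<Longrightarrow> s + t \<in> KS"
| KSs: "s \<in> KS \<Longrightarrow> smult_fun c s \<in> KS"

lemma KS_H: "s \<in> KS \<Longrightarrow> s \<in> H"
  apply (induction rule: KS.induct) using zero_in add_in smult_in ker_in by blast+

lemma KS_minus: "s \<in> KS \<Longrightarrow> t \<in> KS \<Longrightarrow> s - t \<in> KS"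
  by (simp add: smult_fun_minus KS.intros)

lemma vanish_eq:
  assumes f: "f \<in> H" and g: "g \<in> H"
    and ort: "\<And>w \<eta>. w \<in> \<Omega> \<Longrightarrow> ip (f - g) (kernel_fun \<Omega> K w \<eta>) = 0"
  shows "f = g"
proof
  fix z
  show "f z = g z"
  proof (cases "z \<in> \<Omega>")
    case True
    have "vinner ((f - g) z) \<eta> = vinner 0 \<eta>" for \<eta>
      using ort[OF True, of \<eta>] reprod[OF True, of "f - g" \<eta>] f g by simp
    then have "(f - g) z = 0" by (rule vinner_eqI)
    then show ?thesis by simp
  next
    case False
    then show ?thesis using vanish[OF f False] vanish[OF g False] by simp
  qed
qed

end


context hs begin

definition "cauchyH s \<longleftrightarrow> (\<forall>e>0. \<exists>N. \<forall>m\<ge>N. \<forall>n\<ge>N. hnorm ip (s m - s n) < e)"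

lemma density:
  assumes f: "f \<in> H"
  shows "\<exists>s. (\<forall>n. s n \<in> KS) \<and> cauchyH s \<and> (\<lambda>n. hnorm ip (s n - f)) \<longlonglongrightarrow> 0"
proof -
  define nn where "nn x = Re (ip x x)" for x
  define D where "D = (\<lambda>s. nn (f - s)) ` KS"
  define \<delta> where "\<delta> = Inf D"
  have Dne: "D \<noteq> {}" unfolding D_def using KS0 by blast
  have Dbdd: "bdd_below D" unfolding D_def nn_def bdd_below_def
    using f KS_H ip_pos by (intro exI[of _ 0]) auto
  have low: "\<delta> \<le> nn (f - s)" if "s \<in> KS" for s
    unfolding \<delta>_def D_def using that Dbdd D_def by (intro cInf_lower) auto
  have "\<exists>s\<in>KS. nn (f - s) < \<delta> + 1 / (real n + 1)" for n
  proof -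
    have "Inf D < \<delta> + 1 / (real n + 1)" unfolding \<delta>_def by (simp add: add_pos_pos)
    from cInf_lessD[OF Dne this] show ?thesis unfolding D_def by blast
  qed
  then obtain s where sK: "\<And>n. s n \<in> KS" and sb: "\<And>n. nn (f - s n) < \<delta> + 1 / (real n + 1)"
    by metis
  have sH: "\<And>n. s n \<in> H" using sK KS_H by blast
  have nnpos: "\<And>x. x \<in> H \<Longrightarrow> nn x \<ge> 0" unfolding nn_def using ip_pos by blast
  have hn: "\<And>x. x \<in> H \<Longrightarrow> hnorm ip x = sqrt (nn x)" unfolding nn_def hnorm_def by simp
  \<comment> \<open>Cauchy estimate\<close>
  have cest: "nn (s m - s n) \<le> 2 / (real n + 1) + 2 / (real m + 1)" for m n
  proof -
    define a where "a = f - s n"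
    define b where "b = f - s m"
    have aH: "a \<in> H" and bH: "b \<in> H" unfolding a_def b_def using f sH by auto
    have amb: "a - b = s m - s n" unfolding a_def b_def by (simp add: algebra_simps)
    have apb: "a + b = smult_fun 2 (f - smult_fun (1/2) (s n + s m))"
      unfolding a_def b_def by (auto simp: fun_eq_iff vec_eq_iff smult_fun_def field_simps)
    have midK: "smult_fun (1/2) (s n + s m) \<in> KS" using sK by (intro KS.intros)
    have "4 * \<delta> \<le> nn (a + b)"
    proof -
      have "nn (a + b) = 4 * nn (f - smult_fun (1/2) (s n + s m))"
        unfolding apb nn_def using f sH by (subst nn_smult) auto
      then show ?thesis using low[OF midK] by simp
    qed
    moreover have "nn (a - b) + nn (a + b) = 2 * nn a + 2 * nn b"
      unfolding nn_def by (rule parallelogram[OF aH bH])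
    moreover have "nn a < \<delta> + 1 / (real n + 1)" "nn b < \<delta> + 1 / (real m + 1)"
      unfolding a_def b_def using sb by auto
    ultimately show ?thesis unfolding amb by linarith
  qed
  have cau: "cauchyH s"
    unfolding cauchyH_def
  proof (intro allI impI)
    fix e :: real assume e: "e > 0"
    obtain N :: nat where N: "4 / (e^2) < real N" using reals_Archimedean2 by blast
    have e2: "e^2 > 0" using e by simp
    have A: "4 < real N * e^2" using N e2 by (simp add: field_simps)
    then have "4 < (real N + 1) * e^2" using e2 distrib_right[of "real N" 1 "e^2"] by linarith
    then have "4 / (real N + 1) < e^2"
      by (simp add: divide_less_eq mult.commute add_pos_pos)
    show "\<exists>N. \<forall>m\<ge>N. \<forall>n\<ge>N. hnorm ip (s m - s n) < e"
    proof (intro exI[of _ N] allI impI)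
      fix m n assume mN: "m \<ge> N" and nN: "n \<ge> N"
      have "2 / (real n + 1) \<le> 2 / (real N + 1)" "2 / (real m + 1) \<le> 2 / (real N + 1)"
        using mN nN by (simp_all add: frac_le)
      then have "nn (s m - s n) < e^2" using cest[of m n] \<open>4 / (real N + 1) < e^2\<close> by linarith
      then have "sqrt (nn (s m - s n)) < sqrt (e^2)" by (rule real_sqrt_less_mono)
      then show "hnorm ip (s m - s n) < e" using hn[of "s m - s n"] sH e by simp
    qed
  qed
  obtain g where gH: "g \<in> H" and glim: "(\<lambda>n. hnorm ip (s n - g)) \<longlonglongrightarrow> 0"
    using complete[of s] sH cau unfolding cauchyH_def by blast
  \<comment> \<open>f - g is orthogonal to kernels\<close>
  have "f = g"
  proof (rule vanish_eq[OF f gH])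
    fix w \<eta> assume w: "w \<in> \<Omega>"
    define k where "k = kernel_fun \<Omega> K w \<eta>"
    have kH: "k \<in> H" unfolding k_def using w by simp
    have kK: "k \<in> KS" unfolding k_def using w by (rule KSk)
    have est: "(cmod (ip (f - s n) k))^2 \<le> nn k * inverse (real (Suc n))" for n
    proof (cases "nn k = 0")
      case True
      then have "k = 0" using nn_zero kH unfolding nn_def by blast
      then show ?thesis using f sH True by simp
    next
      case False
      have kpos: "nn k > 0" using nnpos[OF kH] False by linarith
      define x where "x = f - s n"
      have xH: "x \<in> H" unfolding x_def using f sH by simp
      define t where "t = ip x k / ip k k"
      have eq: "x - smult_fun t k = f - (s n + smult_fun t k)"
        unfolding x_def by (simp add: algebra_simps)
      have "s n + smult_fun t k \<in> KS" using sK kK by (intro KS.intros)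
      then have "\<delta> \<le> nn (f - (s n + smult_fun t k))" by (rule low)
      then have "\<delta> \<le> nn (x - smult_fun t k)" unfolding eq .
      also have "nn (x - smult_fun t k) = nn x - (cmod (ip x k))^2 / nn k"
        unfolding nn_def t_def using proj_ident[OF xH kH] False unfolding nn_def by simp
      finally have "(cmod (ip x k))^2 / nn k \<le> nn x - \<delta>" by simp
      also have "\<dots> < 1 / (real n + 1)" using sb[of n] unfolding x_def by simp
      finally have "(cmod (ip x k))^2 / nn k < 1 / (real n + 1)" .
      then have "(cmod (ip x k))^2 < nn k * (1 / (real n + 1))"
        using kpos by (simp add: divide_less_eq mult.commute)
      then show ?thesis unfolding x_def by (simp add: inverse_eq_divide add.commute)
    qed
    have l1: "(\<lambda>n. ip (f - s n) k) \<longlonglongrightarrow> 0"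
    proof -
      have "(\<lambda>n. (cmod (ip (f - s n) k))^2) \<longlonglongrightarrow> 0"
      proof (rule Lim_null_comparison)
        show "\<forall>\<^sub>F n in sequentially. norm ((cmod (ip (f - s n) k))^2) \<le> nn k * inverse (real (Suc n))"
          using est by (intro always_eventually allI) simp
        show "(\<lambda>n. nn k * inverse (real (Suc n))) \<longlonglongrightarrow> 0"
          using tendsto_mult_right_zero[OF LIMSEQ_inverse_real_of_nat] .
      qed
      then have "(\<lambda>n. sqrt ((cmod (ip (f - s n) k))^2)) \<longlonglongrightarrow> sqrt 0"
        by (rule tendsto_real_sqrt)
      then have "(\<lambda>n. norm (ip (f - s n) k)) \<longlonglongrightarrow> 0" by simp
      then show ?thesis by (simp add: tendsto_norm_zero_iff)
    qed
    have l2: "(\<lambda>n. ip (s n - g) k) \<longlonglongrightarrow> 0"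
    proof -
      have "(\<lambda>n. ip (s n) k) \<longlonglongrightarrow> ip g k" using ip_cont_left[of s g k] sH gH kH glim by blast
      then have "(\<lambda>n. ip (s n) k - ip g k) \<longlonglongrightarrow> 0" by (rule LIM_zero)
      moreover have "\<And>n. ip (s n - g) k = ip (s n) k - ip g k" using sH gH kH ip_minus_left by blast
      ultimately show ?thesis by simp
    qed
    have "(\<lambda>n. ip (f - s n) k + ip (s n - g) k) \<longlonglongrightarrow> 0 + 0"
      using l1 l2 by (rule tendsto_add)
    moreover have "\<And>n. ip (f - s n) k + ip (s n - g) k = ip (f - g) k"
    proof -
      fix n
      have "f - g = (f - s n) + (s n - g)" by simp
      then show "ip (f - s n) k + ip (s n - g) k = ip (f - g) k"
        using ip_add_left[of "f - s n" "s n - g" k] f gH sH kH by simp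
    qed
    ultimately have "(\<lambda>n. ip (f - g) k) \<longlonglongrightarrow> 0" by simp
    then show "ip (f - g) (kernel_fun \<Omega> K w \<eta>) = 0"
      unfolding k_def by (simp add: LIMSEQ_const_iff)
  qed
  then show ?thesis using sK cau glim by blast
qed

end


context hs begin

lemma transfer:
  fixes \<phi> :: "complex^'d \<Rightarrow> complex^'d" and u :: "complex^'n^'n"
  assumes phi: "\<And>z. \<phi> z \<in> \<Omega> \<longleftrightarrow> z \<in> \<Omega>"
    and sur: "\<And>w. w \<in> \<Omega> \<Longrightarrow> \<exists>w'\<in>\<Omega>. \<phi> w' = w"
    and uK: "\<And>z w. z \<in> \<Omega> \<Longrightarrow> w \<in> \<Omega> \<Longrightarrow> u ** K (\<phi> z) (\<phi> w) = K z w ** u"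
    and uu: "cadj u ** u = mat 1"
  shows "\<forall>f\<in>H. (\<lambda>z. u *v f (\<phi> z)) \<in> H"
    and "\<forall>f\<in>H. \<forall>g\<in>H. ip (\<lambda>z. u *v f (\<phi> z)) (\<lambda>z. u *v g (\<phi> z)) = ip f g"
proof -
  define T where "T f = (\<lambda>z. u *v f (\<phi> z))" for f :: "complex^'d \<Rightarrow> complex^'n"
  have Tadd: "T (a + b) = T a + T b" for a b
    unfolding T_def by (simp add: fun_eq_iff matrix_vector_right_distrib)
  have Tdiff: "T (a - b) = T a - T b" for a b
    unfolding T_def by (simp add: fun_eq_iff matrix_vector_mult_diff_distrib)
  have Tsm: "T (smult_fun c a) = smult_fun c (T a)" for a c
    unfolding T_def smult_fun_def by (simp add: fun_eq_iff vector_scalar_commute)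
  have T0: "T 0 = 0" unfolding T_def by (simp add: fun_eq_iff)
  have Tker: "\<exists>w'\<in>\<Omega>. \<phi> w' = w \<and> T (kernel_fun \<Omega> K w \<xi>) = kernel_fun \<Omega> K w' (u *v \<xi>)"
    if w: "w \<in> \<Omega>" for w \<xi>
  proof -
    obtain w' where w': "w' \<in> \<Omega>" "\<phi> w' = w" using sur[OF w] by blast
    have "T (kernel_fun \<Omega> K w \<xi>) = kernel_fun \<Omega> K w' (u *v \<xi>)"
    proof
      fix z
      show "T (kernel_fun \<Omega> K w \<xi>) z = kernel_fun \<Omega> K w' (u *v \<xi>) z"
      proof (cases "z \<in> \<Omega>")
        case True
        have "u *v (K (\<phi> z) w *v \<xi>) = (u ** K (\<phi> z) (\<phi> w')) *v \<xi>"
          using w' by (simp add: matrix_vector_mul_assoc)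
        also have "\<dots> = K z w' *v (u *v \<xi>)"
          using uK[OF True w'(1)] by (simp add: matrix_vector_mul_assoc)
        finally show ?thesis using True phi[of z] unfolding T_def kernel_fun_def by simp
      next
        case False
        then show ?thesis using phi[of z] unfolding T_def kernel_fun_def by simp
      qed
    qed
    then show ?thesis using w' by blast
  qed
  have TKS: "s \<in> KS \<Longrightarrow> T s \<in> KS" for s
  proof (induction rule: KS.induct)
    case KS0 then show ?case using T0 KS.KS0 by (simp add: zero_fun_def)
  next
    case (KSk w \<xi>) then show ?case using Tker[OF KSk] KS.KSk by metis
  next
    case (KSa s t) then show ?case using Tadd KS.KSa by metis
  next
    case (KSs s c) then show ?case using Tsm KS.KSs by metis
  qed
  have Tiso: "s \<in> KS \<Longrightarrow> f \<in> H \<Longrightarrow> T f \<in> H \<Longrightarrow> ip (T f) (T s) = ip f s" for s f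
  proof (induction rule: KS.induct)
    case KS0 then show ?case using T0 by (simp add: zero_fun_def[symmetric])
  next
    case (KSk w \<xi>)
    obtain w' where w': "w' \<in> \<Omega>" "\<phi> w' = w" "T (kernel_fun \<Omega> K w \<xi>) = kernel_fun \<Omega> K w' (u *v \<xi>)"
      using Tker[OF KSk(1)] by blast
    have "ip (T f) (T (kernel_fun \<Omega> K w \<xi>)) = vinner (T f w') (u *v \<xi>)"
      unfolding w'(3) by (rule reprod[OF w'(1) KSk(3)])
    also have "\<dots> = vinner (f w) \<xi>" unfolding T_def using w' vinner_unitary[OF uu] by simp
    also have "\<dots> = ip f (kernel_fun \<Omega> K w \<xi>)" using reprod[OF KSk(1) KSk(2)] by simp
    finally show ?case .
  next
    case (KSa s t)
    have "ip (T f) (T (s + t)) = ip (T f) (T s) + ip (T f) (T t)"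
      unfolding Tadd by (rule ip_add_right[OF KS_H[OF TKS[OF KSa(1)]] KS_H[OF TKS[OF KSa(2)]] KSa(6)])
    also have "\<dots> = ip f s + ip f t" using KSa(3)[OF KSa(5,6)] KSa(4)[OF KSa(5,6)] by simp
    also have "\<dots> = ip f (s + t)" by (rule ip_add_right[OF KS_H[OF KSa(1)] KS_H[OF KSa(2)] KSa(5), symmetric])
    finally show ?case .
  next
    case (KSs s c)
    have "ip (T f) (T (smult_fun c s)) = cnj c * ip (T f) (T s)"
      unfolding Tsm by (rule ip_smult_right[OF KS_H[OF TKS[OF KSs(1)]] KSs(4)])
    also have "\<dots> = cnj c * ip f s" using KSs(2)[OF KSs(3,4)] by simp
    also have "\<dots> = ip f (smult_fun c s)" by (rule ip_smult_right[OF KS_H[OF KSs(1)] KSs(3), symmetric])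
    finally show ?case .
  qed
  have step3: "T f \<in> H \<and> (\<lambda>n. hnorm ip (T (s n) - T f)) \<longlonglongrightarrow> 0"
    if f: "f \<in> H" and sK: "\<And>n. s n \<in> KS" and cau: "cauchyH s"
      and lim: "(\<lambda>n. hnorm ip (s n - f)) \<longlonglongrightarrow> 0" for f s
  proof -
    have sH: "\<And>n. s n \<in> H" using sK KS_H by blast
    have TsK: "\<And>n. T (s n) \<in> KS" using sK TKS by blast
    have TsH: "\<And>n. T (s n) \<in> H" using TsK KS_H by blast
    have "hnorm ip (T (s m) - T (s n)) = hnorm ip (s m - s n)" for m n
    proof -
      have d: "s m - s n \<in> KS" using sK KS_minus by blast
      have "ip (T (s m - s n)) (T (s m - s n)) = ip (s m - s n) (s m - s n)"
        using Tiso[OF d] d KS_H TKS by blast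
      then show ?thesis unfolding hnorm_def Tdiff by simp
    qed
    then have "cauchyH (\<lambda>n. T (s n))" using cau unfolding cauchyH_def by simp
    then obtain h where hH: "h \<in> H" and hlim: "(\<lambda>n. hnorm ip (T (s n) - h)) \<longlonglongrightarrow> 0"
      using complete[of "\<lambda>n. T (s n)"] TsH unfolding cauchyH_def by blast
    have "h = T f"
    proof
      fix z
      show "h z = T f z"
      proof (cases "z \<in> \<Omega>")
        case True
        have pz: "\<phi> z \<in> \<Omega>" using phi True by blast
        have "vinner (h z) \<eta> = vinner (T f z) \<eta>" for \<eta>
        proof -
          define k where "k = kernel_fun \<Omega> K z \<eta>"
          define k' where "k' = kernel_fun \<Omega> K (\<phi> z) (cadj u *v \<eta>)"
          have kH: "k \<in> H" and k'H: "k' \<in> H" unfolding k_def k'_def using True pz by auto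
          have eqs: "ip (T (s n)) k = ip (s n) k'" for n
          proof -
            have "ip (T (s n)) k = vinner (u *v s n (\<phi> z)) \<eta>"
              unfolding k_def T_def using reprod[OF True] TsH[of n] unfolding T_def by simp
            also have "\<dots> = vinner (s n (\<phi> z)) (cadj u *v \<eta>)" by (rule vinner_mat)
            also have "\<dots> = ip (s n) k'" unfolding k'_def using reprod[OF pz] sH by simp
            finally show ?thesis .
          qed
          have l1: "(\<lambda>n. ip (T (s n)) k) \<longlonglongrightarrow> ip h k"
            using ip_cont_left[of "\<lambda>n. T (s n)" h k] TsH hH kH hlim by blast
          have l2: "(\<lambda>n. ip (s n) k') \<longlonglongrightarrow> ip f k'"
            using ip_cont_left[of s f k'] sH f k'H lim by blast
          have "ip h k = ip f k'" using l1 l2 eqs LIMSEQ_unique by simp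
          moreover have "ip h k = vinner (h z) \<eta>" unfolding k_def using reprod[OF True] hH by simp
          moreover have "ip f k' = vinner (f (\<phi> z)) (cadj u *v \<eta>)"
            unfolding k'_def using reprod[OF pz] f by simp
          moreover have "vinner (T f z) \<eta> = vinner (f (\<phi> z)) (cadj u *v \<eta>)"
            unfolding T_def by (rule vinner_mat)
          ultimately show ?thesis by simp
        qed
        then show ?thesis by (rule vinner_eqI)
      next
        case False
        have "\<phi> z \<notin> \<Omega>" using phi False by blast
        then show ?thesis using vanish[OF hH False] vanish[OF f] unfolding T_def by simp
      qed
    qed
    then show ?thesis using hH hlim by simp
  qed
  show A: "\<forall>f\<in>H. (\<lambda>z. u *v f (\<phi> z)) \<in> H"
  proof
    fix f assume f: "f \<in> H"
    obtain s where "\<forall>n. s n \<in> KS" "cauchyH s" "(\<lambda>n. hnorm ip (s n - f)) \<longlonglongrightarrow> 0"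
      using density[OF f] by blast
    then show "(\<lambda>z. u *v f (\<phi> z)) \<in> H" using step3[OF f] unfolding T_def by blast
  qed
  show "\<forall>f\<in>H. \<forall>g\<in>H. ip (\<lambda>z. u *v f (\<phi> z)) (\<lambda>z. u *v g (\<phi> z)) = ip f g"
  proof (intro ballI)
    fix f g assume f: "f \<in> H" and g: "g \<in> H"
    have TfH: "T f \<in> H" using A f unfolding T_def by blast
    obtain t where tK: "\<forall>n. t n \<in> KS" and tc: "cauchyH t" and tl: "(\<lambda>n. hnorm ip (t n - g)) \<longlonglongrightarrow> 0"
      using density[OF g] by blast
    have st: "T g \<in> H" "(\<lambda>n. hnorm ip (T (t n) - T g)) \<longlonglongrightarrow> 0"
      using step3[OF g] tK tc tl by blast+
    have tH: "\<forall>n. t n \<in> H" using tK KS_H by blast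
    have TtH: "\<forall>n. T (t n) \<in> H" using tK TKS KS_H by blast
    have l1: "(\<lambda>n. ip (T f) (T (t n))) \<longlonglongrightarrow> ip (T f) (T g)"
      using ip_cont_right[OF TtH st(1) TfH st(2)] .
    have l2: "(\<lambda>n. ip f (t n)) \<longlonglongrightarrow> ip f g"
      using ip_cont_right[OF tH g f tl] .
    have "\<And>n. ip (T f) (T (t n)) = ip f (t n)" using Tiso tK f TfH by blast
    then have "ip (T f) (T g) = ip f g" using l1 l2 LIMSEQ_unique by simp
    then show "ip (\<lambda>z. u *v f (\<phi> z)) (\<lambda>z. u *v g (\<phi> z)) = ip f g" unfolding T_def .
  qed
qed

end


lemma cadj_cadj[simp]: "cadj (cadj U) = U"
  unfolding cadj_def by (simp add: vec_eq_iff)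

lemma unitary_vinner: "unitary_mat u \<Longrightarrow> vinner (u *v x) (u *v y) = vinner x y"
  unfolding unitary_mat_def using vinner_unitary by blast

lemma unitary_cadj: "unitary_mat u \<Longrightarrow> unitary_mat (cadj u)"
  unfolding unitary_mat_def by simp

lemma lin_of_add_hom:
  fixes F :: "'a::field^'n \<Rightarrow> 'a^'m"
  assumes "\<And>x y. F (x + y) = F x + F y" "\<And>c x. F (c *s x) = c *s F x"
  shows "Vector_Spaces.linear (*s) (*s) F"
  by unfold_locales (simp_all add: assms)

lemma lin_mult_op_apply: "lin_mult_op A j f z = (A *v z) $ j *s f z"
  unfolding lin_mult_op_def smult_fun_def mult_op_def fun_sum_apply
  by (simp add: vec_eq_iff matrix_vector_mult_def sum_distrib_right sum_distrib_left sum_component mult_ac)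

lemma mult_op_apply: "mult_op j f z = z $ j *s f z"
  unfolding mult_op_def by simp

lemma monomial_step:
  fixes \<alpha> :: "'d::finite \<Rightarrow> nat"
  assumes "\<alpha> j > 0"
  shows "monomial \<alpha> z = z $ j * monomial (\<alpha>(j := \<alpha> j - 1)) z"
proof -
  define \<beta> where "\<beta> = \<alpha>(j := \<alpha> j - 1)"
  have 1: "monomial \<alpha> z = (z$j)^(\<alpha> j) * (\<Prod>i\<in>UNIV - {j}. (z$i)^(\<alpha> i))"
    unfolding monomial_def by (rule prod.remove) simp_all
  have 2: "monomial \<beta> z = (z$j)^(\<beta> j) * (\<Prod>i\<in>UNIV - {j}. (z$i)^(\<beta> i))"
    unfolding monomial_def by (rule prod.remove) simp_all
  have 3: "(\<Prod>i\<in>UNIV - {j}. (z$i)^(\<beta> i)) = (\<Prod>i\<in>UNIV - {j}. (z$i)^(\<alpha> i))"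
    unfolding \<beta>_def by (rule prod.cong) auto
  have 4: "(z$j)^(\<alpha> j) = z$j * (z$j)^(\<beta> j)"
  proof -
    obtain k where k: "\<alpha> j = Suc k" using assms gr0_implies_Suc by blast
    have "\<beta> j = k" unfolding \<beta>_def using k by simp
    then show ?thesis using k by simp
  qed
  show ?thesis unfolding \<beta>_def[symmetric] 1 2 3 4 by simp
qed

lemma monomial_zero_exp: "monomial (\<lambda>_. 0) z = 1"
  unfolding monomial_def by simp

lemma linaut_facts:
  fixes A :: "complex^'d^'d"
  assumes A: "A \<in> lin_aut \<Omega>" and op: "open \<Omega>" and ne: "\<Omega> \<noteq> {}"
  shows "A ** matrix_inv A = mat 1" "matrix_inv A ** A = mat 1"
    "\<And>z. A *v z \<in> \<Omega> \<longleftrightarrow> z \<in> \<Omega>" "\<And>z. matrix_inv A *v z \<in> \<Omega> \<longleftrightarrow> z \<in> \<Omega>"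
proof -
  have bij: "bij_betw ((*v) A) \<Omega> \<Omega>" using A unfolding lin_aut_def biholo_def by simp
  then have injo: "inj_on ((*v) A) \<Omega>" and im: "(*v) A ` \<Omega> = \<Omega>"
    unfolding bij_betw_def by auto
  have sc: "A *v (r *\<^sub>R v) = r *\<^sub>R (A *v v)" for r :: real and v :: "complex^'d"
    by (simp add: vec_eq_iff matrix_vector_mult_def scaleR_sum_right mult_scaleR_right)
  have inj: "inj ((*v) A)"
  proof (rule injI)
    fix x y assume xy: "A *v x = A *v y"
    show "x = y"
    proof (rule ccontr)
      assume nxy: "x \<noteq> y"
      define v where "v = x - y"
      have v0: "v \<noteq> 0" using nxy unfolding v_def by simp
      have Av: "A *v v = 0" using xy unfolding v_def by (simp add: matrix_vector_mult_diff_distrib)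
      obtain p where p: "p \<in> \<Omega>" using ne by blast
      obtain e where e: "e > 0" "ball p e \<subseteq> \<Omega>" using op p open_contains_ball by blast
      define r where "r = e / (2 * norm v)"
      have nv: "norm v > 0" using v0 by simp
      have r: "r > 0" unfolding r_def using e nv by simp
      define q where "q = p + r *\<^sub>R v"
      have "dist p q = r * norm v" unfolding q_def dist_norm using r by simp
      also have "\<dots> = e / 2" unfolding r_def using nv by simp
      finally have "q \<in> ball p e" using e by simp
      then have q: "q \<in> \<Omega>" using e by blast
      have "A *v q = A *v p" unfolding q_def by (simp add: matrix_vector_right_distrib sc Av)
      then have "q = p" using injo p q by (meson inj_onD)
      then show False unfolding q_def using r v0 by simp
    qed
  qed
  obtain B where B: "B ** A = mat 1" using inj matrix_left_invertible_injective by blast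
  then have B2: "A ** B = mat 1" using matrix_left_right_inverse by blast
  have "A ** matrix_inv A = mat 1 \<and> matrix_inv A ** A = mat 1"
    unfolding matrix_inv_def by (rule someI[of _ B]) (use B B2 in simp)
  then show i1: "A ** matrix_inv A = mat 1" and i2: "matrix_inv A ** A = mat 1" by auto
  show i3: "\<And>z. A *v z \<in> \<Omega> \<longleftrightarrow> z \<in> \<Omega>"
  proof
    fix z assume "A *v z \<in> \<Omega>"
    then obtain y where y: "y \<in> \<Omega>" "A *v z = A *v y" using im by (metis imageE)
    then show "z \<in> \<Omega>" using inj by (metis injD)
  next
    fix z assume "z \<in> \<Omega>" then show "A *v z \<in> \<Omega>" using im by blast
  qed
  show "\<And>z. matrix_inv A *v z \<in> \<Omega> \<longleftrightarrow> z \<in> \<Omega>"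
    using i3 i1 by (metis matrix_vector_mul_assoc matrix_vector_mul_lid)
qed



context hs begin

lemma sum_in: "finite I \<Longrightarrow> (\<And>i. i \<in> I \<Longrightarrow> F i \<in> H) \<Longrightarrow> sum F I \<in> H"
proof (induction I rule: finite_induct)
  case empty then show ?case using zero_in by (simp only: sum.empty)
next
  case (insert x I)
  have "sum F (insert x I) = F x + sum F I" using insert(1,2) by (rule sum.insert)
  moreover have "F x \<in> H" using insert(4) by blast
  moreover have "sum F I \<in> H" using insert(3,4) by blast
  ultimately show ?case using add_in by metis
qed

lemma ext_eq:
  assumes a: "a \<in> H" and b: "b \<in> H" and h: "\<And>g. g \<in> H \<Longrightarrow> ip g a = ip g b"
  shows "a = b"
proof -
  have d: "a - b \<in> H" using a b by simp
  have "ip (a - b) (a - b) = ip (a - b) a - ip (a - b) b"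
    using ip_minus_right[OF a b d] .
  also have "\<dots> = 0" using h[OF d] by simp
  finally have "a - b = 0" using ip_def0[OF d] by blast
  then show ?thesis by simp
qed

lemma unitary_facts:
  assumes U: "unitary_op H ip T"
  shows "\<And>f. f \<in> H \<Longrightarrow> T f \<in> H"
    and "\<And>g. g \<in> H \<Longrightarrow> \<exists>f\<in>H. T f = g"
    and "\<And>f g. f \<in> H \<Longrightarrow> g \<in> H \<Longrightarrow> ip (T f) (T g) = ip f g"
    and "\<And>f g. f \<in> H \<Longrightarrow> g \<in> H \<Longrightarrow> T (f + g) = T f + T g"
    and "\<And>f c. f \<in> H \<Longrightarrow> T (smult_fun c f) = smult_fun c (T f)"
proof -
  have U': "T ` H = H" "\<forall>f\<in>H. \<forall>g\<in>H. T (f + g) = T f + T g"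
     "\<forall>c. \<forall>f\<in>H. T (smult_fun c f) = smult_fun c (T f)"
     "\<forall>f\<in>H. \<forall>g\<in>H. ip (T f) (T g) = ip f g"
    using U unfolding unitary_op_def by blast+
  show "\<And>f. f \<in> H \<Longrightarrow> T f \<in> H" using U'(1) by blast
  show "\<And>g. g \<in> H \<Longrightarrow> \<exists>f\<in>H. T f = g" using U'(1) by (metis imageE)
  show "\<And>f g. f \<in> H \<Longrightarrow> g \<in> H \<Longrightarrow> ip (T f) (T g) = ip f g" using U'(4) by blast
  show "\<And>f g. f \<in> H \<Longrightarrow> g \<in> H \<Longrightarrow> T (f + g) = T f + T g" using U'(2) by blast
  show "\<And>f c. f \<in> H \<Longrightarrow> T (smult_fun c f) = smult_fun c (T f)" using U'(3) by blast
qed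

lemma unitary_minus:
  assumes U: "unitary_op H ip T" and f: "f \<in> H" and g: "g \<in> H"
  shows "T (f - g) = T f - T g"
proof -
  have "T (f - g) = T (f + smult_fun (-1) g)" by (simp only: smult_fun_minus)
  also have "\<dots> = T f + smult_fun (-1) (T g)"
    using unitary_facts(4,5)[OF U] f g by simp
  also have "\<dots> = T f - T g" by (simp only: smult_fun_minus)
  finally show ?thesis .
qed

lemma unitary_inj:
  assumes U: "unitary_op H ip T" and f: "f \<in> H" and g: "g \<in> H" and e: "T f = T g"
  shows "f = g"
proof (rule ext_eq[OF f g])
  fix h assume h: "h \<in> H"
  have "ip h f = ip (T h) (T f)" using unitary_facts(3)[OF U h f] by simp
  also have "\<dots> = ip (T h) (T g)" using e by simp
  also have "\<dots> = ip h g" using unitary_facts(3)[OF U h g] .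
  finally show "ip h f = ip h g" .
qed

lemma hadj_char:
  assumes U: "unitary_op H ip T" and f: "f \<in> H"
  shows "hadj H ip T (T f) = f"
  unfolding hadj_def
proof (rule the_equality)
  show "f \<in> H \<and> (\<forall>h\<in>H. ip (T h) (T f) = ip h f)"
    using f unitary_facts(3)[OF U] by blast
next
  fix h' assume h': "h' \<in> H \<and> (\<forall>h\<in>H. ip (T h) (T f) = ip h h')"
  show "h' = f"
  proof (rule ext_eq)
    show "h' \<in> H" using h' by blast
    show "f \<in> H" by (rule f)
    fix g assume g: "g \<in> H"
    show "ip g h' = ip g f" using h' g unitary_facts(3)[OF U g f] by simp
  qed
qed

lemma hadj_facts:
  assumes U: "unitary_op H ip T" and g: "g \<in> H"
  shows "hadj H ip T g \<in> H" "T (hadj H ip T g) = g"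
proof -
  obtain f where f: "f \<in> H" "T f = g" using unitary_facts(2)[OF U g] by blast
  then show "hadj H ip T g \<in> H" "T (hadj H ip T g) = g"
    using hadj_char[OF U f(1)] by simp_all
qed

lemma poly_orth:
  assumes dense: "polys_dense \<Omega> H ip" and h: "h \<in> H"
    and orth: "\<And>p. vec_poly p \<Longrightarrow> ip h (restrict_fun \<Omega> p) = 0"
  shows "h = 0"
proof (rule ccontr)
  assume h0: "h \<noteq> 0"
  have pos: "Re (ip h h) > 0"
    using ip_pos[OF h] nn_zero[OF h] h0 by force
  then obtain p where p: "vec_poly p" and pe: "hnorm ip (h - restrict_fun \<Omega> p) < sqrt (Re (ip h h))"
    using dense h unfolding polys_dense_def by (meson real_sqrt_gt_zero)
  define q where "q = restrict_fun \<Omega> p"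
  have qH: "q \<in> H" using dense p unfolding polys_dense_def q_def by blast
  have o1: "ip h q = 0" using orth[OF p] unfolding q_def .
  have o2: "ip q h = 0" using ip_sym[OF h qH] o1 by simp
  have "ip (h - q) (h - q) = ip h h - ip h q - (ip q h - ip q q)"
    using h qH by (simp add: ip_minus_left ip_minus_right)
  then have "Re (ip (h - q) (h - q)) = Re (ip h h) + Re (ip q q)" using o1 o2 by simp
  then have "Re (ip h h) \<le> Re (ip (h - q) (h - q))" using ip_pos[OF qH] by simp
  then have "sqrt (Re (ip h h)) \<le> hnorm ip (h - q)" unfolding hnorm_def by simp
  then show False using pe unfolding q_def by simp
qed

end


context hs begin

lemma dir32:
  fixes A B :: "complex^'d^'d" and u :: "complex^'n^'n"
  assumes AB: "A ** B = mat 1" "B ** A = mat 1"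
    and OA: "\<And>z. A *v z \<in> \<Omega> \<longleftrightarrow> z \<in> \<Omega>" and OB: "\<And>z. B *v z \<in> \<Omega> \<longleftrightarrow> z \<in> \<Omega>"
    and u: "unitary_mat u"
    and U: "unitary_op H ip (\<lambda>f z. u *v f (B *v z))"
    and z: "z \<in> \<Omega>" and w: "w \<in> \<Omega>"
  shows "K z w = u ** K (B *v z) (B *v w) ** cadj u"
proof -
  define T where "T = (\<lambda>(f::complex^'d \<Rightarrow> complex^'n) z. u *v f (B *v z))"
  have UT: "unitary_op H ip T" using U unfolding T_def .
  have Bw: "B *v w \<in> \<Omega>" using OB w by blast
  have Bz: "B *v z \<in> \<Omega>" using OB z by blast
  have key: "T (kernel_fun \<Omega> K (B *v w) \<eta>) = kernel_fun \<Omega> K w (u *v \<eta>)" for \<eta>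
  proof (rule ext_eq)
    show "T (kernel_fun \<Omega> K (B *v w) \<eta>) \<in> H" using unitary_facts(1)[OF UT] Bw by simp
    show "kernel_fun \<Omega> K w (u *v \<eta>) \<in> H" using w by simp
    fix g assume g: "g \<in> H"
    obtain f where f: "f \<in> H" "T f = g" using unitary_facts(2)[OF UT g] by blast
    have "ip g (T (kernel_fun \<Omega> K (B *v w) \<eta>)) = ip f (kernel_fun \<Omega> K (B *v w) \<eta>)"
      using unitary_facts(3)[OF UT f(1), of "kernel_fun \<Omega> K (B *v w) \<eta>"] Bw f(2) by simp
    also have "\<dots> = vinner (f (B *v w)) \<eta>" using reprod[OF Bw f(1)] .
    also have "\<dots> = vinner (T f w) (u *v \<eta>)"
      unfolding T_def using unitary_vinner[OF u] by simp
    also have "\<dots> = ip g (kernel_fun \<Omega> K w (u *v \<eta>))" using reprod[OF w g] f(2) by simp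
    finally show "ip g (T (kernel_fun \<Omega> K (B *v w) \<eta>)) = ip g (kernel_fun \<Omega> K w (u *v \<eta>))" .
  qed
  have "(u ** K (B *v z) (B *v w)) *v \<eta> = (K z w ** u) *v \<eta>" for \<eta>
  proof -
    have "T (kernel_fun \<Omega> K (B *v w) \<eta>) z = kernel_fun \<Omega> K w (u *v \<eta>) z" using key by simp
    then show ?thesis unfolding T_def kernel_fun_def using z Bz by (simp add: matrix_vector_mul_assoc)
  qed
  then have e: "u ** K (B *v z) (B *v w) = K z w ** u" using matrix_eq by blast
  have "K z w = K z w ** (u ** cadj u)" using u unfolding unitary_mat_def by simp
  also have "\<dots> = u ** K (B *v z) (B *v w) ** cadj u" by (simp add: matrix_mul_assoc e)
  finally show ?thesis .
qed

lemma dir23: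
  fixes A B :: "complex^'d^'d" and u :: "complex^'n^'n"
  assumes AB: "A ** B = mat 1" "B ** A = mat 1"
    and OA: "\<And>z. A *v z \<in> \<Omega> \<longleftrightarrow> z \<in> \<Omega>" and OB: "\<And>z. B *v z \<in> \<Omega> \<longleftrightarrow> z \<in> \<Omega>"
    and u: "unitary_mat u"
    and Kq: "\<And>z w. z \<in> \<Omega> \<Longrightarrow> w \<in> \<Omega> \<Longrightarrow> K z w = u ** K (B *v z) (B *v w) ** cadj u"
  shows "unitary_op H ip (\<lambda>f z. u *v f (B *v z))"
proof -
  have uu: "cadj u ** u = mat 1" "u ** cadj u = mat 1" using u unfolding unitary_mat_def by auto
  have BAv: "B *v (A *v z) = z" for z using AB by (simp add: matrix_vector_mul_assoc)
  have ABv: "A *v (B *v z) = z" for z using AB by (simp add: matrix_vector_mul_assoc)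
  have t1: "\<forall>f\<in>H. (\<lambda>z. u *v f (B *v z)) \<in> H"
   and t2: "\<forall>f\<in>H. \<forall>g\<in>H. ip (\<lambda>z. u *v f (B *v z)) (\<lambda>z. u *v g (B *v z)) = ip f g"
  proof -
    have sur: "\<exists>w'\<in>\<Omega>. B *v w' = w" if "w \<in> \<Omega>" for w
      using that OA BAv by blast
    have uK: "u ** K (B *v z) (B *v w) = K z w ** u" if "z \<in> \<Omega>" "w \<in> \<Omega>" for z w
    proof -
      have "K z w ** u = u ** K (B *v z) (B *v w) ** (cadj u ** u)"
        using Kq[OF that] by (simp add: matrix_mul_assoc)
      then show ?thesis using uu by simp
    qed
    show "\<forall>f\<in>H. (\<lambda>z. u *v f (B *v z)) \<in> H"
         "\<forall>f\<in>H. \<forall>g\<in>H. ip (\<lambda>z. u *v f (B *v z)) (\<lambda>z. u *v g (B *v z)) = ip f g"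
      using transfer[of "(*v) B" u, OF OB sur uK uu(1)] by blast+
  qed
  have t3: "\<forall>f\<in>H. (\<lambda>z. cadj u *v f (A *v z)) \<in> H"
  proof -
    have sur: "\<exists>w'\<in>\<Omega>. A *v w' = w" if "w \<in> \<Omega>" for w
      using that OB ABv by blast
    have uK: "cadj u ** K (A *v z) (A *v w) = K z w ** cadj u" if "z \<in> \<Omega>" "w \<in> \<Omega>" for z w
    proof -
      have Az: "A *v z \<in> \<Omega>" and Aw: "A *v w \<in> \<Omega>" using OA that by auto
      have "cadj u ** K (A *v z) (A *v w) = (cadj u ** u) ** K z w ** cadj u"
        using Kq[OF Az Aw] by (simp add: BAv matrix_mul_assoc)
      then show ?thesis using uu by simp
    qed
    have uu': "cadj (cadj u) ** cadj u = mat 1" using uu by simp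
    show ?thesis using transfer(1)[of "(*v) A" "cadj u", OF OA sur uK uu'] by blast
  qed
  show ?thesis unfolding unitary_op_def
  proof (intro conjI ballI allI)
    show "(\<lambda>f z. u *v f (B *v z)) ` H = H"
    proof
      show "(\<lambda>f z. u *v f (B *v z)) ` H \<subseteq> H" using t1 by blast
      show "H \<subseteq> (\<lambda>f z. u *v f (B *v z)) ` H"
      proof
        fix g assume g: "g \<in> H"
        have "g = (\<lambda>z. u *v (\<lambda>z. cadj u *v g (A *v z)) (B *v z))"
          by (simp add: matrix_vector_mul_assoc uu AB)
        moreover have "(\<lambda>z. cadj u *v g (A *v z)) \<in> H" using t3 g by blast
        ultimately show "g \<in> (\<lambda>f z. u *v f (B *v z)) ` H"
          by (rule image_eqI[where x="\<lambda>z. cadj u *v g (A *v z)"])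
      qed
    qed
    fix f g assume f: "f \<in> H" and g: "g \<in> H"
    show "(\<lambda>z. u *v (f + g) (B *v z)) = (\<lambda>z. u *v f (B *v z)) + (\<lambda>z. u *v g (B *v z))"
      by (simp add: fun_eq_iff matrix_vector_right_distrib)
    show "ip (\<lambda>z. u *v f (B *v z)) (\<lambda>z. u *v g (B *v z)) = ip f g" using t2 f g by blast
  next
    fix c f assume f: "f \<in> H"
    show "(\<lambda>z. u *v smult_fun c f (B *v z)) = smult_fun c (\<lambda>z. u *v f (B *v z))"
      unfolding smult_fun_def by (simp add: vector_scalar_commute)
  qed
qed

lemma dir31:
  fixes A B :: "complex^'d^'d" and u :: "complex^'n^'n"
  assumes AB: "A ** B = mat 1"
    and U: "unitary_op H ip (\<lambda>f z. u *v f (B *v z))"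
    and g: "g \<in> H"
  shows "(\<lambda>f z. u *v f (B *v z)) (lin_mult_op A j (hadj H ip (\<lambda>f z. u *v f (B *v z)) g)) = mult_op j g"
proof -
  define T where "T = (\<lambda>(f::complex^'d \<Rightarrow> complex^'n) z. u *v f (B *v z))"
  have UT: "unitary_op H ip T" using U unfolding T_def .
  define h where "h = hadj H ip T g"
  have h: "T h = g" using hadj_facts(2)[OF UT g] unfolding h_def .
  have ABv: "A *v (B *v z) = z" for z using AB by (simp add: matrix_vector_mul_assoc)
  have "T (lin_mult_op A j h) = mult_op j g"
  proof
    fix z
    have "T (lin_mult_op A j h) z = z $ j *s (u *v h (B *v z))"
      unfolding T_def lin_mult_op_apply ABv by (simp add: vector_scalar_commute)
    also have "\<dots> = mult_op j g z" using h unfolding mult_op_apply T_def by auto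
    finally show "T (lin_mult_op A j h) z = mult_op j g z" .
  qed
  then show ?thesis unfolding T_def h_def .
qed

end


lemma matrix_vector_sum: "M *v sum f S = (\<Sum>x\<in>S. M *v f x)"
  by (induction S rule: infinite_finite_induct) (auto simp: matrix_vector_right_distrib)

lemma vec_polyE:
  assumes "vec_poly p"
  obtains S c where "finite S" "\<And>z. p z = (\<Sum>\<alpha>\<in>S. monomial \<alpha> z *s c \<alpha>)"
  using assms unfolding vec_poly_def by blast

lemma unitary_op_cong:
  assumes U: "unitary_op H ip T" and eq: "\<And>f. f \<in> H \<Longrightarrow> T' f = T f"
    and cl: "\<And>f g. f \<in> H \<Longrightarrow> g \<in> H \<Longrightarrow> f + g \<in> H" "\<And>c f. f \<in> H \<Longrightarrow> smult_fun c f \<in> H"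
  shows "unitary_op H ip T'"
proof -
  have "T' ` H = T ` H" using eq by (rule image_cong[OF refl])
  then show ?thesis using U eq cl unfolding unitary_op_def by simp
qed

context hs begin

lemma dir13:
  fixes A B :: "complex^'d^'d" and \<Gamma> :: "(complex^'d \<Rightarrow> complex^'n) \<Rightarrow> (complex^'d \<Rightarrow> complex^'n)"
  assumes AB: "A ** B = mat 1" "B ** A = mat 1"
    and OA: "\<And>z. A *v z \<in> \<Omega> \<longleftrightarrow> z \<in> \<Omega>" and OB: "\<And>z. B *v z \<in> \<Omega> \<longleftrightarrow> z \<in> \<Omega>"
    and zero: "0 \<in> \<Omega>"
    and dense: "polys_dense \<Omega> H ip"
    and bdd: "\<forall>j. bounded_op_on H ip (mult_op j)"
    and norm0: "\<forall>z\<in>\<Omega>. K z 0 = mat 1"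
    and U: "unitary_op H ip \<Gamma>"
    and rel: "\<forall>j. \<forall>g\<in>H. \<Gamma> (lin_mult_op A j (hadj H ip \<Gamma> g)) = mult_op j g"
  shows "\<exists>Q. unitary_mat Q \<and> unitary_op H ip (\<lambda>f z. Q *v f (B *v z))"
proof -
  define G where "G g = hadj H ip \<Gamma> g" for g
  have GH: "\<And>g. g \<in> H \<Longrightarrow> G g \<in> H" unfolding G_def using hadj_facts(1)[OF U] by blast
  have TG: "\<And>g. g \<in> H \<Longrightarrow> \<Gamma> (G g) = g" unfolding G_def using hadj_facts(2)[OF U] by blast
  have GT: "\<And>f. f \<in> H \<Longrightarrow> G (\<Gamma> f) = f" unfolding G_def using hadj_char[OF U] by blast
  have TH: "\<And>f. f \<in> H \<Longrightarrow> \<Gamma> f \<in> H" using unitary_facts(1)[OF U] .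
  have Tip: "\<And>f g. f \<in> H \<Longrightarrow> g \<in> H \<Longrightarrow> ip (\<Gamma> f) (\<Gamma> g) = ip f g" using unitary_facts(3)[OF U] .
  have Gadd: "G (a + b) = G a + G b" if "a \<in> H" "b \<in> H" for a b
  proof -
    have "\<Gamma> (G a + G b) = a + b" using unitary_facts(4)[OF U] GH TG that by simp
    then have "G (\<Gamma> (G a + G b)) = G (a + b)" by simp
    then show ?thesis using GT GH that add_in by metis
  qed
  have Gsm: "G (smult_fun c a) = smult_fun c (G a)" if "a \<in> H" for a c
  proof -
    have "\<Gamma> (smult_fun c (G a)) = smult_fun c a" using unitary_facts(5)[OF U] GH TG that by simp
    then have "G (\<Gamma> (smult_fun c (G a))) = G (smult_fun c a)" by simp
    then show ?thesis using GT GH that smult_in by metis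
  qed
  have T0: "\<Gamma> 0 = 0"
  proof -
    have "\<Gamma> (smult_fun 0 0) = smult_fun 0 (\<Gamma> 0)" using unitary_facts(5)[OF U] zero_in by blast
    then show ?thesis by simp
  qed
  have G0: "G 0 = 0" using GT[OF zero_in] T0 by simp
  have Gip: "ip (G a) k = ip a (\<Gamma> k)" if "a \<in> H" "k \<in> H" for a k
    using Tip[OF GH[OF that(1)] that(2)] TG[OF that(1)] by simp
  have TipG: "ip (\<Gamma> f) g = ip f (G g)" if "f \<in> H" "g \<in> H" for f g
    using Tip[OF that(1) GH[OF that(2)]] TG[OF that(2)] by simp
  have Gpres: "ip (G a) (G b) = ip a b" if "a \<in> H" "b \<in> H" for a b
    using Tip[OF GH[OF that(1)] GH[OF that(2)]] TG that by simp
  have multH: "mult_op j f \<in> H" if "f \<in> H" for f j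
    using bdd that unfolding bounded_op_on_def by blast
  have lmoH: "lin_mult_op A j f \<in> H" if "f \<in> H" for f j
    unfolding lin_mult_op_def by (rule sum_in) (simp_all add: multH that)
  have Gmult: "G (mult_op j g) = lin_mult_op A j (G g)" if "g \<in> H" for g j
  proof -
    have "\<Gamma> (lin_mult_op A j (G g)) = mult_op j g" using rel that unfolding G_def by blast
    then show ?thesis by (metis GT lmoH GH that)
  qed
  have Gsum: "G (sum F S) = (\<Sum>x\<in>S. G (F x))" if "finite S" "\<And>x. x \<in> S \<Longrightarrow> F x \<in> H" for F S
    using that
  proof (induction S rule: finite_induct)
    case empty then show ?case by (simp only: sum.empty G0)
  next
    case (insert x S)
    have "G (sum F (insert x S)) = G (F x + sum F S)" by (subst sum.insert[OF insert(1,2)]) (rule refl)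
    also have "\<dots> = G (F x) + G (sum F S)" using Gadd insert(4) sum_in[OF insert(1)] by simp
    also have "\<dots> = (\<Sum>x\<in>insert x S. G (F x))" using insert(3,4) by (subst sum.insert[OF insert(1,2)]) simp
    finally show ?case .
  qed
  \<comment> \<open>constants\<close>
  define E where "E \<xi> = restrict_fun \<Omega> (\<lambda>z. \<xi>)" for \<xi> :: "complex^'n"
  have E_ker: "E \<xi> = kernel_fun \<Omega> K 0 \<xi>" for \<xi>
    unfolding E_def restrict_fun_def kernel_fun_def using norm0 by auto
  have EH: "E \<xi> \<in> H" for \<xi> unfolding E_ker using zero by simp
  have E_ip: "ip f (E \<xi>) = vinner (f 0) \<xi>" if "f \<in> H" for f \<xi>
    unfolding E_ker using reprod[OF zero that] .
  have E_val: "z \<in> \<Omega> \<Longrightarrow> E \<xi> z = \<xi>" for z \<xi> unfolding E_def restrict_fun_def by simp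
  have E_add: "E (x + y) = E x + E y" for x y unfolding E_def restrict_fun_def by (auto simp: fun_eq_iff)
  have E_sm: "E (c *s x) = smult_fun c (E x)" for c x unfolding E_def restrict_fun_def smult_fun_def
    by (auto simp: fun_eq_iff)
  have E0: "E 0 = 0" unfolding E_def restrict_fun_def by (auto simp: fun_eq_iff)
  \<comment> \<open>monomials\<close>
  define pm where "pm \<alpha> \<xi> = restrict_fun \<Omega> (\<lambda>z. monomial \<alpha> z *s \<xi>)" for \<alpha> and \<xi> :: "complex^'n"
  have pmH: "pm \<alpha> \<xi> \<in> H" for \<alpha> \<xi>
  proof -
    have "vec_poly (\<lambda>z. monomial \<alpha> z *s \<xi>)" unfolding vec_poly_def
      by (rule exI[of _ "{\<alpha>}"], rule exI[of _ "\<lambda>_. \<xi>"]) simp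
    then show ?thesis using dense unfolding polys_dense_def pm_def by blast
  qed
  have pm_step: "pm \<alpha> \<xi> = mult_op j (pm (\<alpha>(j := \<alpha> j - 1)) \<xi>)" if "\<alpha> j > 0" for \<alpha> \<xi> j
    unfolding pm_def restrict_fun_def mult_op_def using monomial_step[where \<alpha>=\<alpha> and j=j, OF that]
    by (auto simp: fun_eq_iff vector_smult_assoc)
  have pm0: "pm (\<lambda>_. 0) \<xi> = E \<xi>" for \<xi> unfolding pm_def E_def by (simp add: monomial_zero_exp)
  have Gpm_n: "\<forall>\<alpha>. sum \<alpha> UNIV = n \<longrightarrow> (\<forall>z. G (pm \<alpha> \<xi>) z = monomial \<alpha> (A *v z) *s G (E \<xi>) z)" for n \<xi>
  proof (induction n)
    case 0
    show ?case
    proof (intro allI impI)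
      fix \<alpha> :: "'d \<Rightarrow> nat" and z assume "sum \<alpha> UNIV = 0"
      then have "\<alpha> = (\<lambda>_. 0)" by (simp add: fun_eq_iff)
      then show "G (pm \<alpha> \<xi>) z = monomial \<alpha> (A *v z) *s G (E \<xi>) z" using pm0 by (simp add: monomial_def)
    qed
  next
    case (Suc n)
    show ?case
    proof (intro allI impI)
      fix \<alpha> :: "'d \<Rightarrow> nat" and z assume s: "sum \<alpha> UNIV = Suc n"
      obtain j where j: "\<alpha> j > 0" using s by (metis neq0_conv sum.neutral_const sum.cong nat.distinct(1))
      define \<beta> where "\<beta> = \<alpha>(j := \<alpha> j - 1)"
      have "sum \<alpha> UNIV = \<alpha> j + sum \<alpha> (UNIV - {j})" by (simp add: sum.remove)
      moreover have "sum \<beta> UNIV = \<beta> j + sum \<beta> (UNIV - {j})" by (simp add: sum.remove)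
      moreover have "sum \<beta> (UNIV - {j}) = sum \<alpha> (UNIV - {j})" unfolding \<beta>_def by (rule sum.cong) auto
      moreover have "\<beta> j = \<alpha> j - 1" unfolding \<beta>_def by simp
      ultimately have sb: "sum \<beta> UNIV = n" using s j by simp
      have "G (pm \<alpha> \<xi>) z = G (mult_op j (pm \<beta> \<xi>)) z" using pm_step[of \<alpha> j \<xi>, OF j] unfolding \<beta>_def by simp
      also have "\<dots> = (A *v z) $ j *s G (pm \<beta> \<xi>) z" using Gmult[OF pmH] lin_mult_op_apply by simp
      also have "\<dots> = (A *v z) $ j *s (monomial \<beta> (A *v z) *s G (E \<xi>) z)" using Suc.IH sb by simp
      also have "\<dots> = monomial \<alpha> (A *v z) *s G (E \<xi>) z"
        using monomial_step[where \<alpha>=\<alpha> and j=j and z="A *v z", OF j] unfolding \<beta>_def by (simp add: vector_smult_assoc)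
      finally show "G (pm \<alpha> \<xi>) z = monomial \<alpha> (A *v z) *s G (E \<xi>) z" .
    qed
  qed
  have Gpm: "G (pm \<alpha> \<xi>) z = monomial \<alpha> (A *v z) *s G (E \<xi>) z" for \<alpha> \<xi> z
    using Gpm_n[of "sum \<alpha> UNIV" \<xi>] by blast
  \<comment> \<open>polynomials\<close>
  have poly_dec: "restrict_fun \<Omega> p = (\<Sum>\<alpha>\<in>S. pm \<alpha> (c \<alpha>))"
    if "finite S" "\<And>z. p z = (\<Sum>\<alpha>\<in>S. monomial \<alpha> z *s c \<alpha>)" for p S c
  proof
    fix z
    show "restrict_fun \<Omega> p z = (\<Sum>\<alpha>\<in>S. pm \<alpha> (c \<alpha>)) z"
      unfolding fun_sum_apply pm_def restrict_fun_def by (cases "z \<in> \<Omega>") (simp_all add: that(2))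
  qed
  have Gpoly: "G (restrict_fun \<Omega> p) z = (\<Sum>\<alpha>\<in>S. monomial \<alpha> (A *v z) *s G (E (c \<alpha>)) z)"
    if "finite S" "\<And>z. p z = (\<Sum>\<alpha>\<in>S. monomial \<alpha> z *s c \<alpha>)" for p S c z
  proof -
    have "G (restrict_fun \<Omega> p) = (\<Sum>\<alpha>\<in>S. G (pm \<alpha> (c \<alpha>)))"
      unfolding poly_dec[OF that] by (rule Gsum[OF that(1)]) (rule pmH)
    then show ?thesis unfolding fun_sum_apply Gpm by simp
  qed
  \<comment> \<open>the matrix of constants at 0\<close>
  define Lf where "Lf \<zeta> = G (E \<zeta>) 0" for \<zeta>
  have Lf_lin: "Vector_Spaces.linear (*s) (*s) Lf"
  proof (rule lin_of_add_hom)
    fix x y show "Lf (x + y) = Lf x + Lf y" unfolding Lf_def E_add Gadd[OF EH EH] by (rule plus_fun_apply)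
  next
    fix c x show "Lf (c *s x) = c *s Lf x" unfolding Lf_def E_sm Gsm[OF EH] by (simp only: smult_fun_def)
  qed
  define Lm where "Lm = matrix Lf"
  have Lm: "Lm *v \<zeta> = G (E \<zeta>) 0" for \<zeta>
  proof -
    have "Lm *v \<zeta> = Lf \<zeta>" unfolding Lm_def by (rule matrix_works[OF Lf_lin])
    then show ?thesis unfolding Lf_def .
  qed
  have A0: "A *v 0 = (0::complex^'d)" by simp
  have Gpoly0: "G (restrict_fun \<Omega> p) 0 = Lm *v p 0" if vp: "vec_poly p" for p
  proof -
    obtain S c where Sc: "finite S" "\<And>z. p z = (\<Sum>\<alpha>\<in>S. monomial \<alpha> z *s c \<alpha>)"
      using vec_polyE[OF vp] by metis
    have "G (restrict_fun \<Omega> p) 0 = (\<Sum>\<alpha>\<in>S. monomial \<alpha> 0 *s (Lm *v c \<alpha>))"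
      unfolding Gpoly[OF Sc, of 0] A0 Lm ..
    also have "\<dots> = Lm *v p 0" unfolding Sc(2) matrix_vector_sum by (simp add: vector_scalar_commute)
    finally show ?thesis .
  qed
  define P where "P = cadj Lm"
  have TE: "\<Gamma> (E \<xi>) = E (P *v \<xi>)" for \<xi>
  proof -
    have "\<Gamma> (E \<xi>) - E (P *v \<xi>) = 0"
    proof (rule poly_orth[OF dense])
      show "\<Gamma> (E \<xi>) - E (P *v \<xi>) \<in> H" using TH EH by simp
      fix p :: "complex^'d \<Rightarrow> complex^'n" assume p: "vec_poly p"
      define q where "q = restrict_fun \<Omega> p"
      have qH: "q \<in> H" using dense p unfolding polys_dense_def q_def by blast
      have q0: "q 0 = p 0" unfolding q_def restrict_fun_def using zero by simp
      have "ip (\<Gamma> (E \<xi>)) q = ip (E \<xi>) (G q)" using TipG EH qH by blast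
      also have "\<dots> = cnj (ip (G q) (E \<xi>))" using ip_sym GH qH EH by blast
      also have "\<dots> = cnj (vinner (Lm *v p 0) \<xi>)" unfolding E_ip[OF GH[OF qH]] unfolding q_def Gpoly0[OF p] ..
      also have "\<dots> = cnj (vinner (p 0) (P *v \<xi>))" unfolding P_def vinner_mat ..
      also have "\<dots> = cnj (ip q (E (P *v \<xi>)))" unfolding E_ip[OF qH] q0 ..
      also have "\<dots> = ip (E (P *v \<xi>)) q" using ip_sym qH EH by metis
      finally have "ip (\<Gamma> (E \<xi>)) q = ip (E (P *v \<xi>)) q" .
      then show "ip (\<Gamma> (E \<xi>) - E (P *v \<xi>)) (restrict_fun \<Omega> p) = 0"
        unfolding q_def[symmetric] using ip_minus_left TH EH qH by simp
    qed
    then show ?thesis by simp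
  qed
  have Pinj: "\<forall>x. P *v x = 0 \<longrightarrow> x = 0"
  proof (intro allI impI)
    fix x assume "P *v x = 0"
    then have "\<Gamma> (E x) = \<Gamma> 0" using TE E0 T0 by simp
    then have "E x = 0" using unitary_inj[OF U EH zero_in] by blast
    then have "E x 0 = 0" by simp
    then show "x = 0" using E_val[OF zero] by simp
  qed
  obtain Q where QP: "Q ** P = mat 1" using Pinj matrix_left_invertible_ker by blast
  have PQ: "P ** Q = mat 1" using QP matrix_left_right_inverse by blast
  have GE: "G (E \<eta>) = E (Q *v \<eta>)" for \<eta>
  proof -
    have "\<Gamma> (E (Q *v \<eta>)) = E \<eta>" unfolding TE by (simp add: matrix_vector_mul_assoc PQ)
    then show ?thesis using GT[OF EH] by metis
  qed
  have Gpoly_val: "G (restrict_fun \<Omega> p) z = Q *v p (A *v z)" if vp: "vec_poly p" and zz: "z \<in> \<Omega>" for p z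
  proof -
    obtain S c where Sc: "finite S" "\<And>z. p z = (\<Sum>\<alpha>\<in>S. monomial \<alpha> z *s c \<alpha>)"
      using vec_polyE[OF vp] by metis
    have "G (restrict_fun \<Omega> p) z = (\<Sum>\<alpha>\<in>S. monomial \<alpha> (A *v z) *s (Q *v c \<alpha>))"
      unfolding Gpoly[OF Sc, of z] GE E_val[OF zz] ..
    also have "\<dots> = Q *v p (A *v z)" unfolding Sc(2) matrix_vector_sum by (simp add: vector_scalar_commute)
    finally show ?thesis .
  qed
  have Tker: "\<Gamma> (kernel_fun \<Omega> K w \<eta>) = kernel_fun \<Omega> K (A *v w) (cadj Q *v \<eta>)" if w: "w \<in> \<Omega>" for w \<eta>
  proof -
    have Aw: "A *v w \<in> \<Omega>" using OA w by blast
    have kH: "kernel_fun \<Omega> K w \<eta> \<in> H" using w by simp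
    have k'H: "kernel_fun \<Omega> K (A *v w) (cadj Q *v \<eta>) \<in> H" using Aw by simp
    have "\<Gamma> (kernel_fun \<Omega> K w \<eta>) - kernel_fun \<Omega> K (A *v w) (cadj Q *v \<eta>) = 0"
    proof (rule poly_orth[OF dense])
      show "\<Gamma> (kernel_fun \<Omega> K w \<eta>) - kernel_fun \<Omega> K (A *v w) (cadj Q *v \<eta>) \<in> H"
        using TH kH k'H by simp
      fix p :: "complex^'d \<Rightarrow> complex^'n" assume p: "vec_poly p"
      define q where "q = restrict_fun \<Omega> p"
      have qH: "q \<in> H" using dense p unfolding polys_dense_def q_def by blast
      have qA: "q (A *v w) = p (A *v w)" unfolding q_def restrict_fun_def using Aw by simp
      have "ip q (\<Gamma> (kernel_fun \<Omega> K w \<eta>)) = ip (G q) (kernel_fun \<Omega> K w \<eta>)"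
        using Gip qH kH by metis
      also have "\<dots> = vinner (Q *v p (A *v w)) \<eta>"
        unfolding reprod[OF w GH[OF qH]] unfolding q_def Gpoly_val[OF p w] ..
      also have "\<dots> = vinner (p (A *v w)) (cadj Q *v \<eta>)" by (rule vinner_mat)
      also have "\<dots> = ip q (kernel_fun \<Omega> K (A *v w) (cadj Q *v \<eta>))"
        unfolding reprod[OF Aw qH] qA ..
      finally have e: "ip q (\<Gamma> (kernel_fun \<Omega> K w \<eta>)) = ip q (kernel_fun \<Omega> K (A *v w) (cadj Q *v \<eta>))" .
      have "ip (\<Gamma> (kernel_fun \<Omega> K w \<eta>) - kernel_fun \<Omega> K (A *v w) (cadj Q *v \<eta>)) q
          = cnj (ip q (\<Gamma> (kernel_fun \<Omega> K w \<eta>) - kernel_fun \<Omega> K (A *v w) (cadj Q *v \<eta>)))"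
        using ip_sym TH kH k'H qH minus_in by metis
      also have "\<dots> = 0" using ip_minus_right[OF TH[OF kH] k'H qH] e by simp
      finally show "ip (\<Gamma> (kernel_fun \<Omega> K w \<eta>) - kernel_fun \<Omega> K (A *v w) (cadj Q *v \<eta>)) (restrict_fun \<Omega> p) = 0"
        unfolding q_def .
    qed
    then show ?thesis by simp
  qed
  have Gval: "G f w = Q *v f (A *v w)" if f: "f \<in> H" and w: "w \<in> \<Omega>" for f w
  proof (rule vinner_eqI)
    fix \<eta>
    have Aw: "A *v w \<in> \<Omega>" using OA w by blast
    have "vinner (G f w) \<eta> = ip (G f) (kernel_fun \<Omega> K w \<eta>)" using reprod[OF w GH[OF f]] by simp
    also have "\<dots> = ip f (\<Gamma> (kernel_fun \<Omega> K w \<eta>))" using Gip[OF f] w by simp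
    also have "\<dots> = vinner (f (A *v w)) (cadj Q *v \<eta>)" unfolding Tker[OF w] reprod[OF Aw f] ..
    also have "\<dots> = vinner (Q *v f (A *v w)) \<eta>" by (rule vinner_mat[symmetric])
    finally show "vinner (G f w) \<eta> = vinner (Q *v f (A *v w)) \<eta>" .
  qed
  have QQ: "cadj Q ** Q = mat 1"
  proof -
    have "(cadj Q ** Q) *v \<xi> = mat 1 *v \<xi>" for \<xi>
    proof (rule vinner_eqI)
      fix \<eta>
      have "ip (G (E \<xi>)) (G (E \<eta>)) = ip (E \<xi>) (E \<eta>)" using Gpres EH by blast
      then have "ip (E (Q *v \<xi>)) (E (Q *v \<eta>)) = ip (E \<xi>) (E \<eta>)" unfolding GE .
      then have "vinner (Q *v \<xi>) (Q *v \<eta>) = vinner \<xi> \<eta>" unfolding E_ip[OF EH] E_val[OF zero] .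
      then show "vinner ((cadj Q ** Q) *v \<xi>) \<eta> = vinner (mat 1 *v \<xi>) \<eta>"
        by (simp add: vinner_mat matrix_vector_mul_assoc[symmetric])
    qed
    then show ?thesis using matrix_eq by blast
  qed
  have QQ2: "Q ** cadj Q = mat 1" using QQ matrix_left_right_inverse by blast
  have uQ: "unitary_mat (cadj Q)" unfolding unitary_mat_def using QQ QQ2 by simp
  have same: "(\<lambda>z. cadj Q *v f (B *v z)) = \<Gamma> f" if f: "f \<in> H" for f
  proof
    fix z
    show "cadj Q *v f (B *v z) = \<Gamma> f z"
    proof (cases "z \<in> \<Omega>")
      case True
      have Bz: "B *v z \<in> \<Omega>" using OB True by blast
      have "f (B *v z) = G (\<Gamma> f) (B *v z)" using GT[OF f] by simp
      also have "\<dots> = Q *v \<Gamma> f z" using Gval[OF TH[OF f] Bz] AB by (simp add: matrix_vector_mul_assoc)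
      finally show ?thesis using QQ by (simp add: matrix_vector_mul_assoc)
    next
      case False
      have "B *v z \<notin> \<Omega>" using OB False by blast
      then show ?thesis using vanish[OF f] vanish[OF TH[OF f] False] by simp
    qed
  qed
  have "unitary_op H ip (\<lambda>f z. cadj Q *v f (B *v z))"
    by (rule unitary_op_cong[OF U]) (simp_all add: same)
  then show ?thesis using uQ by blast
qed

end


context hs begin

lemma L13:
  assumes opn: "open \<Omega>" and ne: "\<Omega> \<noteq> {}" and zero: "0 \<in> \<Omega>"
    and dense: "polys_dense \<Omega> H ip"
    and bdd: "\<forall>j. bounded_op_on H ip (mult_op j)"
    and norm0: "\<forall>z\<in>\<Omega>. K z 0 = mat 1"
    and P1: "\<forall>A\<in>lin_aut \<Omega>. \<exists>\<Gamma>. unitary_op H ip \<Gamma> \<and>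
              (\<forall>j. \<forall>g\<in>H. \<Gamma> (lin_mult_op A j (hadj H ip \<Gamma> g)) = mult_op j g)"
  shows "\<exists>c :: complex^'d^'d \<Rightarrow> complex^'n^'n.
             (\<forall>A\<in>lin_aut \<Omega>. unitary_mat (c A)) \<and>
             (\<forall>A\<in>lin_aut \<Omega>. unitary_op H ip (\<lambda>f z. c A *v f (matrix_inv A *v z)))"
proof -
  have "\<forall>A\<in>lin_aut \<Omega>. \<exists>Q. unitary_mat Q \<and> unitary_op H ip (\<lambda>f z. Q *v f (matrix_inv A *v z))"
  proof
    fix A assume A: "A \<in> lin_aut \<Omega>"
    obtain \<Gamma> where U: "unitary_op H ip \<Gamma>"
      and rel: "\<forall>j. \<forall>g\<in>H. \<Gamma> (lin_mult_op A j (hadj H ip \<Gamma> g)) = mult_op j g"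
      using P1 A by blast
    show "\<exists>Q. unitary_mat Q \<and> unitary_op H ip (\<lambda>f z. Q *v f (matrix_inv A *v z))"
      using dir13[OF linaut_facts[OF A opn ne] zero dense bdd norm0 U rel] .
  qed
  from bchoice[OF this] obtain c :: "complex^'d^'d \<Rightarrow> complex^'n^'n" where
    c: "\<forall>A\<in>lin_aut \<Omega>. unitary_mat (c A) \<and> unitary_op H ip (\<lambda>f z. c A *v f (matrix_inv A *v z))"
    by blast
  then show ?thesis by blast
qed

lemma L31:
  assumes opn: "open \<Omega>" and ne: "\<Omega> \<noteq> {}"
    and P3: "\<exists>c :: complex^'d^'d \<Rightarrow> complex^'n^'n.
             (\<forall>A\<in>lin_aut \<Omega>. unitary_mat (c A)) \<and>
             (\<forall>A\<in>lin_aut \<Omega>. unitary_op H ip (\<lambda>f z. c A *v f (matrix_inv A *v z)))"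
  shows "\<forall>A\<in>lin_aut \<Omega>. \<exists>\<Gamma>. unitary_op H ip \<Gamma> \<and>
              (\<forall>j. \<forall>g\<in>H. \<Gamma> (lin_mult_op A j (hadj H ip \<Gamma> g)) = mult_op j g)"
proof
  fix A assume A: "A \<in> lin_aut \<Omega>"
  obtain c :: "complex^'d^'d \<Rightarrow> complex^'n^'n" where
    c: "\<forall>A\<in>lin_aut \<Omega>. unitary_op H ip (\<lambda>f z. c A *v f (matrix_inv A *v z))"
    using P3 by blast
  have U: "unitary_op H ip (\<lambda>f z. c A *v f (matrix_inv A *v z))" using c A by blast
  have "\<forall>j. \<forall>g\<in>H. (\<lambda>f z. c A *v f (matrix_inv A *v z))
          (lin_mult_op A j (hadj H ip (\<lambda>f z. c A *v f (matrix_inv A *v z)) g)) = mult_op j g"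
    using dir31[OF linaut_facts(1)[OF A opn ne] U] by blast
  then show "\<exists>\<Gamma>. unitary_op H ip \<Gamma> \<and>
              (\<forall>j. \<forall>g\<in>H. \<Gamma> (lin_mult_op A j (hadj H ip \<Gamma> g)) = mult_op j g)"
    using U by blast
qed

lemma L32:
  assumes opn: "open \<Omega>" and ne: "\<Omega> \<noteq> {}"
    and P3: "\<exists>c :: complex^'d^'d \<Rightarrow> complex^'n^'n.
             (\<forall>A\<in>lin_aut \<Omega>. unitary_mat (c A)) \<and>
             (\<forall>A\<in>lin_aut \<Omega>. unitary_op H ip (\<lambda>f z. c A *v f (matrix_inv A *v z)))"
  shows "\<exists>c :: complex^'d^'d \<Rightarrow> complex^'d \<Rightarrow> complex^'n^'n.
             (\<forall>A\<in>lin_aut \<Omega>. \<forall>z\<in>\<Omega>. unitary_mat (c A z)) \<and>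
             (\<forall>A\<in>lin_aut \<Omega>. \<forall>z\<in>\<Omega>. \<forall>w\<in>\<Omega>. c A z = c A w) \<and>
             (\<forall>A\<in>lin_aut \<Omega>. \<forall>z\<in>\<Omega>. \<forall>w\<in>\<Omega>.
                K z w = c A z ** K (matrix_inv A *v z) (matrix_inv A *v w) ** cadj (c A w))"
proof -
  obtain c :: "complex^'d^'d \<Rightarrow> complex^'n^'n" where
    cu: "\<forall>A\<in>lin_aut \<Omega>. unitary_mat (c A)" and
    c: "\<forall>A\<in>lin_aut \<Omega>. unitary_op H ip (\<lambda>f z. c A *v f (matrix_inv A *v z))"
    using P3 by blast
  have "\<forall>A\<in>lin_aut \<Omega>. \<forall>z\<in>\<Omega>. \<forall>w\<in>\<Omega>.
                K z w = c A ** K (matrix_inv A *v z) (matrix_inv A *v w) ** cadj (c A)"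
  proof (intro ballI)
    fix A z w assume A: "A \<in> lin_aut \<Omega>" and z: "z \<in> \<Omega>" and w: "w \<in> \<Omega>"
    have U: "unitary_op H ip (\<lambda>f z. c A *v f (matrix_inv A *v z))" using c A by blast
    show "K z w = c A ** K (matrix_inv A *v z) (matrix_inv A *v w) ** cadj (c A)"
      using dir32[OF linaut_facts[OF A opn ne] _ U z w] cu A by blast
  qed
  then show ?thesis using cu by (intro exI[of _ "\<lambda>A z. c A"]) simp
qed

lemma L23:
  assumes opn: "open \<Omega>" and ne: "\<Omega> \<noteq> {}" and zero: "0 \<in> \<Omega>"
    and P2: "\<exists>c :: complex^'d^'d \<Rightarrow> complex^'d \<Rightarrow> complex^'n^'n.
             (\<forall>A\<in>lin_aut \<Omega>. \<forall>z\<in>\<Omega>. unitary_mat (c A z)) \<and>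
             (\<forall>A\<in>lin_aut \<Omega>. \<forall>z\<in>\<Omega>. \<forall>w\<in>\<Omega>. c A z = c A w) \<and>
             (\<forall>A\<in>lin_aut \<Omega>. \<forall>z\<in>\<Omega>. \<forall>w\<in>\<Omega>.
                K z w = c A z ** K (matrix_inv A *v z) (matrix_inv A *v w) ** cadj (c A w))"
  shows "\<exists>c :: complex^'d^'d \<Rightarrow> complex^'n^'n.
             (\<forall>A\<in>lin_aut \<Omega>. unitary_mat (c A)) \<and>
             (\<forall>A\<in>lin_aut \<Omega>. unitary_op H ip (\<lambda>f z. c A *v f (matrix_inv A *v z)))"
proof -
  obtain c :: "complex^'d^'d \<Rightarrow> complex^'d \<Rightarrow> complex^'n^'n" where
    cu: "\<forall>A\<in>lin_aut \<Omega>. \<forall>z\<in>\<Omega>. unitary_mat (c A z)" and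
    cc: "\<forall>A\<in>lin_aut \<Omega>. \<forall>z\<in>\<Omega>. \<forall>w\<in>\<Omega>. c A z = c A w" and
    cK: "\<forall>A\<in>lin_aut \<Omega>. \<forall>z\<in>\<Omega>. \<forall>w\<in>\<Omega>.
                K z w = c A z ** K (matrix_inv A *v z) (matrix_inv A *v w) ** cadj (c A w)"
    using P2 by blast
  have "\<forall>A\<in>lin_aut \<Omega>. unitary_mat (c A 0) \<and> unitary_op H ip (\<lambda>f z. c A 0 *v f (matrix_inv A *v z))"
  proof
    fix A assume A: "A \<in> lin_aut \<Omega>"
    have u: "unitary_mat (c A 0)" using cu A zero by blast
    have Kq: "K z w = c A 0 ** K (matrix_inv A *v z) (matrix_inv A *v w) ** cadj (c A 0)"
      if "z \<in> \<Omega>" "w \<in> \<Omega>" for z w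
    proof -
      have "c A z = c A 0" "c A w = c A 0" using cc A that zero by blast+
      then show ?thesis using cK A that by metis
    qed
    show "unitary_mat (c A 0) \<and> unitary_op H ip (\<lambda>f z. c A 0 *v f (matrix_inv A *v z))"
      using dir23[OF linaut_facts[OF A opn ne] u Kq] u by blast
  qed
  then show ?thesis by (intro exI[of _ "\<lambda>A. c A 0"]) blast
qed

end

theorem lemma2p2:
  fixes \<Omega> :: "(complex^'d) set"
    and H :: "(complex^'d \<Rightarrow> complex^'n) set"
    and ip :: "(complex^'d \<Rightarrow> complex^'n) \<Rightarrow> (complex^'d \<Rightarrow> complex^'n) \<Rightarrow> complex"
    and K :: "complex^'d \<Rightarrow> complex^'d \<Rightarrow> complex^'n^'n"
  assumes dom: "irreducible_bsd \<Omega>"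
    and zero: "0 \<in> \<Omega>"
    and rkhs: "rkhs_holo \<Omega> H ip K"
    and dense: "polys_dense \<Omega> H ip"
    and bdd: "\<forall>j. bounded_op_on H ip (mult_op j)"
    and norm0: "\<forall>z\<in>\<Omega>. K z 0 = mat 1"
  shows "((\<forall>A\<in>lin_aut \<Omega>. \<exists>\<Gamma>. unitary_op H ip \<Gamma> \<and>
              (\<forall>j. \<forall>g\<in>H. \<Gamma> (lin_mult_op A j (hadj H ip \<Gamma> g)) = mult_op j g))
         \<longleftrightarrow>
         (\<exists>c :: complex^'d^'d \<Rightarrow> complex^'d \<Rightarrow> complex^'n^'n.
             (\<forall>A\<in>lin_aut \<Omega>. \<forall>z\<in>\<Omega>. unitary_mat (c A z)) \<and>
             (\<forall>A\<in>lin_aut \<Omega>. \<forall>z\<in>\<Omega>. \<forall>w\<in>\<Omega>. c A z = c A w) \<and>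
             (\<forall>A\<in>lin_aut \<Omega>. \<forall>z\<in>\<Omega>. \<forall>w\<in>\<Omega>.
                K z w = c A z ** K (matrix_inv A *v z) (matrix_inv A *v w) ** cadj (c A w))))
       \<and>
       ((\<exists>c :: complex^'d^'d \<Rightarrow> complex^'d \<Rightarrow> complex^'n^'n.
             (\<forall>A\<in>lin_aut \<Omega>. \<forall>z\<in>\<Omega>. unitary_mat (c A z)) \<and>
             (\<forall>A\<in>lin_aut \<Omega>. \<forall>z\<in>\<Omega>. \<forall>w\<in>\<Omega>. c A z = c A w) \<and>
             (\<forall>A\<in>lin_aut \<Omega>. \<forall>z\<in>\<Omega>. \<forall>w\<in>\<Omega>.
                K z w = c A z ** K (matrix_inv A *v z) (matrix_inv A *v w) ** cadj (c A w)))
         \<longleftrightarrow>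
         (\<exists>c :: complex^'d^'d \<Rightarrow> complex^'n^'n.
             (\<forall>A\<in>lin_aut \<Omega>. unitary_mat (c A)) \<and>
             (\<forall>A\<in>lin_aut \<Omega>. unitary_op H ip (\<lambda>f z. c A *v f (matrix_inv A *v z)))))"
proof -
  interpret hs \<Omega> H ip K by (rule hs.intro) (rule rkhs)
  have opn: "open \<Omega>" and ne: "\<Omega> \<noteq> {}"
    using dom unfolding irreducible_bsd_def bounded_symmetric_domain_def bounded_domain_def by auto
  show ?thesis
  proof (intro conjI iffI)
    assume h: "\<forall>A\<in>lin_aut \<Omega>. \<exists>\<Gamma>. unitary_op H ip \<Gamma> \<and>
              (\<forall>j. \<forall>g\<in>H. \<Gamma> (lin_mult_op A j (hadj H ip \<Gamma> g)) = mult_op j g)"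
    show "\<exists>c :: complex^'d^'d \<Rightarrow> complex^'d \<Rightarrow> complex^'n^'n.
             (\<forall>A\<in>lin_aut \<Omega>. \<forall>z\<in>\<Omega>. unitary_mat (c A z)) \<and>
             (\<forall>A\<in>lin_aut \<Omega>. \<forall>z\<in>\<Omega>. \<forall>w\<in>\<Omega>. c A z = c A w) \<and>
             (\<forall>A\<in>lin_aut \<Omega>. \<forall>z\<in>\<Omega>. \<forall>w\<in>\<Omega>.
                K z w = c A z ** K (matrix_inv A *v z) (matrix_inv A *v w) ** cadj (c A w))"
      by (rule L32[OF opn ne L13[OF opn ne zero dense bdd norm0 h]])
  next
    assume h: "\<exists>c :: complex^'d^'d \<Rightarrow> complex^'d \<Rightarrow> complex^'n^'n.
             (\<forall>A\<in>lin_aut \<Omega>. \<forall>z\<in>\<Omega>. unitary_mat (c A z)) \<and>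
             (\<forall>A\<in>lin_aut \<Omega>. \<forall>z\<in>\<Omega>. \<forall>w\<in>\<Omega>. c A z = c A w) \<and>
             (\<forall>A\<in>lin_aut \<Omega>. \<forall>z\<in>\<Omega>. \<forall>w\<in>\<Omega>.
                K z w = c A z ** K (matrix_inv A *v z) (matrix_inv A *v w) ** cadj (c A w))"
    show "\<forall>A\<in>lin_aut \<Omega>. \<exists>\<Gamma>. unitary_op H ip \<Gamma> \<and>
              (\<forall>j. \<forall>g\<in>H. \<Gamma> (lin_mult_op A j (hadj H ip \<Gamma> g)) = mult_op j g)"
      by (rule L31[OF opn ne L23[OF opn ne zero h]])
  next
    assume h: "\<exists>c :: complex^'d^'d \<Rightarrow> complex^'d \<Rightarrow> complex^'n^'n.
             (\<forall>A\<in>lin_aut \<Omega>. \<forall>z\<in>\<Omega>. unitary_mat (c A z)) \<and>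
             (\<forall>A\<in>lin_aut \<Omega>. \<forall>z\<in>\<Omega>. \<forall>w\<in>\<Omega>. c A z = c A w) \<and>
             (\<forall>A\<in>lin_aut \<Omega>. \<forall>z\<in>\<Omega>. \<forall>w\<in>\<Omega>.
                K z w = c A z ** K (matrix_inv A *v z) (matrix_inv A *v w) ** cadj (c A w))"
    show "\<exists>c :: complex^'d^'d \<Rightarrow> complex^'n^'n.
             (\<forall>A\<in>lin_aut \<Omega>. unitary_mat (c A)) \<and>
             (\<forall>A\<in>lin_aut \<Omega>. unitary_op H ip (\<lambda>f z. c A *v f (matrix_inv A *v z)))"
      by (rule L23[OF opn ne zero h])
  next
    assume h: "\<exists>c :: complex^'d^'d \<Rightarrow> complex^'n^'n.
             (\<forall>A\<in>lin_aut \<Omega>. unitary_mat (c A)) \<and>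
             (\<forall>A\<in>lin_aut \<Omega>. unitary_op H ip (\<lambda>f z. c A *v f (matrix_inv A *v z)))"
    show "\<exists>c :: complex^'d^'d \<Rightarrow> complex^'d \<Rightarrow> complex^'n^'n.
             (\<forall>A\<in>lin_aut \<Omega>. \<forall>z\<in>\<Omega>. unitary_mat (c A z)) \<and>
             (\<forall>A\<in>lin_aut \<Omega>. \<forall>z\<in>\<Omega>. \<forall>w\<in>\<Omega>. c A z = c A w) \<and>
             (\<forall>A\<in>lin_aut \<Omega>. \<forall>z\<in>\<Omega>. \<forall>w\<in>\<Omega>.
                K z w = c A z ** K (matrix_inv A *v z) (matrix_inv A *v w) ** cadj (c A w))"
      by (rule L32[OF opn ne h])
  qed
qed


end
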